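(* Let $(\bar x,\bar f)\in W$ and let $\bar t=(\bar t_1,\dots,\bar t_d)$ with $\bar f\in\bar H=\prod_{i=1}^d[a_{i\tau(i,\bar t_i-1)},a_{i\tau(i,\bar t_i)}]$. For $i\in[d]$ define $\bar u_i,\hat u_i,u^*_i\in(\mathbb{R}\cup\{-\infty\})^{n+1}$ by $\bar u_{in}=\bar f_i$, $\bar u_{ij}=u_{ij}(\bar x)$ for $j<n$; $\hat u_{ij}=a_{ij}$ for $j\le\tau(i,\bar t_i-1)$, $\hat u_{ij}=\bar f_i$ for $j\ge\tau(i,\bar t_i)$, $\hat u_{ij}=-\infty$ otherwise; and $u^*_i=\bar u_i\vee\hat u_i$ (componentwise maximum). Define $\bar s_{ij}=\operatorname{conc}(\xi_{i,a_i})(a_{ij};\bar u_i)$, $\hat s_{ij}=\operatorname{conc}(\xi_{i,a_i})(a_{ij};\hat u_i)$, $s^*_{ij}=\operatorname{conc}(\xi_{i,a_i})(a_{ij};u^*_i)$. Then $\varphi(\bar x,\bar f)=\operatorname{conc}_Q(\bar\phi)(\bar s)$, $\varphi_{\mathcal{H}-}(\bar x,\bar f)=\operatorname{conc}_Q(\bar\phi)(\hat s)$, and $\varphi_{\mathcal{H}}(\bar x,\bar f)=\operatorname{conc}_Q(\bar\phi)(s^* )$.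
   Context: Setting: $d,n\ge1$, $[k]=\{1,\dots,k\}$; $a\in\mathbb{R}^{d\times(n+1)}$ with $a_{i0}<\dots<a_{in}$; integers $0=\tau(i,0)<\dots<\tau(i,l_i)=n$. $X\subseteq\mathbb{R}^m$, $f:X\to\mathbb{R}^d$ with $a_{i0}\le f_i(x)\le a_{in}$; $\phi:\mathbb{R}^d\to\mathbb{R}$; $u:X\to\mathbb{R}^{d\times(n+1)}$ convex with $u_{i0}(x)=a_{i0}$, $u_{in}(x)=f_i(x)$, $u_{ij}(x)\le\min\{f_i(x),a_{ij}\}$ for $j\in[n-1]$; $W$ a convex set containing $\{(x,f(x))\mid x\in X\}$. $v_{ij}\in\mathbb{R}^{n+1}$ has $k$-th component $a_{i,\min\{k,j\}}$; $Q_i=\operatorname{conv}\{v_{i0},\dots,v_{in}\}$, $Q=\prod_iQ_i$; $\bar\phi(s)=\phi(s_{1n},\dots,s_{dn})$; $\operatorname{conc}_Q(\bar\phi)$ is its concave envelope over $Q$ (taken as $-\infty$ outside $Q$). $\Delta_i=\{z_i\mid1=z_{i0}\ge\dots\ge z_{in}\ge0\}$; (Inc-1): $z_i\in\Delta_i$, $\delta_{it}\in\{0,1\}$, $z_{i\tau(i,t)}\ge\delta_{it}\ge z_{i\tau(i,t)+1}$; $Z(s)_{i0}=1$, $Z(s)_{ij}=(s_{ij}-s_{i,j-1})/(a_{ij}-a_{i,j-1})$. For $(x,s_{\cdot n})$ with $s_{\cdot n}=(s_{1n},\dots,s_{dn})$, the maxima below are over $s\in\mathbb{R}^{d\times(n+1)}$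 with the given last components and over $\delta$: $\varphi(x,s_{\cdot n})=\max\{\operatorname{conc}_Q(\bar\phi)(s)\mid u(x)\le s,(x,s_{\cdot n})\in W\}$; $\varphi_{\mathcal{H}-}(x,s_{\cdot n})=\max\{\operatorname{conc}_Q(\bar\phi)(s)\mid(Z(s),\delta)\text{ satisfies (Inc-1)},(x,s_{\cdot n})\in W\}$; $\varphi_{\mathcal{H}}(x,s_{\cdot n})=\max\{\operatorname{conc}_Q(\bar\phi)(s)\mid(Z(s),\delta)\text{ satisfies (Inc-1)},u(x)\le s,(x,s_{\cdot n})\in W\}$. For $u_i\in(\mathbb{R}\cup\{-\infty\})^{n+1}$, $\xi_{i,a_i}(\cdot;u_i):[a_{i0},a_{in}]\to\mathbb{R}\cup\{-\infty\}$ equals $u_{ij}$ at $a=a_{ij}$ ($j=0,\dots,n$) and $-\infty$ elsewhere; $\operatorname{conc}(\xi_{i,a_i})(\cdot;u_i)$ is its concave envelope over $[a_{i0},a_{in}]$. *)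

theory Defs
  imports "HOL-Analysis.Analysis"
begin

text \<open>Matrices in R^(d x (n+1)) are represented as functions s :: 'd => nat => real,
  row index i :: 'd (a finite type, so d = CARD('d) >= 1), column index j in {0..n};
  entries with column index > n are required to be 0.\<close>

definition is_mat :: "nat \<Rightarrow> ('d \<Rightarrow> nat \<Rightarrow> real) \<Rightarrow> bool" where
  "is_mat n s \<longleftrightarrow> (\<forall>i k. n < k \<longrightarrow> s i k = 0)"

definition vvec :: "('d \<Rightarrow> nat \<Rightarrow> real) \<Rightarrow> nat \<Rightarrow> 'd \<Rightarrow> nat \<Rightarrow> nat \<Rightarrow> real" where
  "vvec a n i j k = (if k \<le> n then a i (min k j) else 0)"

definition Qset :: "('d \<Rightarrow> nat \<Rightarrow> real) \<Rightarrow> nat \<Rightarrow> ('d \<Rightarrow> nat \<Rightarrow> real) set" where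
  "Qset a n = {s. \<forall>i. \<exists>\<mu>::nat \<Rightarrow> real. (\<forall>j\<le>n. 0 \<le> \<mu> j) \<and> (\<Sum>j\<le>n. \<mu> j) = 1 \<and>
                   s i = (\<lambda>k. \<Sum>j\<le>n. \<mu> j * vvec a n i j k)}"

text \<open>Concave envelope over a set S of matrices of a real-valued function g
  (supremum over finite convex combinations; -infinity outside conv S).\<close>
definition conc_mat :: "('d \<Rightarrow> nat \<Rightarrow> real) set \<Rightarrow> (('d \<Rightarrow> nat \<Rightarrow> real) \<Rightarrow> real)
    \<Rightarrow> ('d \<Rightarrow> nat \<Rightarrow> real) \<Rightarrow> ereal" where
  "conc_mat S g s = Sup {ereal (\<Sum>k\<in>K. c k * g (y k)) | (K::nat set) c y.
      finite K \<and> (\<forall>k\<in>K. 0 \<le> c k \<and> y k \<in> S) \<and> sum c K = 1 \<and>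
      (\<lambda>i j. \<Sum>k\<in>K. c k * y k i j) = s}"

definition conc_line :: "real set \<Rightarrow> (real \<Rightarrow> ereal) \<Rightarrow> real \<Rightarrow> ereal" where
  "conc_line S g x = Sup {(\<Sum>k\<in>K. ereal (c k) * g (y k)) | (K::nat set) c y.
      finite K \<and> (\<forall>k\<in>K. 0 \<le> c k \<and> y k \<in> S) \<and> sum c K = 1 \<and>
      (\<Sum>k\<in>K. c k * y k) = x}"

definition phibar :: "(real^'d \<Rightarrow> real) \<Rightarrow> nat \<Rightarrow> ('d \<Rightarrow> nat \<Rightarrow> real) \<Rightarrow> real" where
  "phibar \<phi> n s = \<phi> (\<chi> i. s i n)"

definition concQ :: "('d \<Rightarrow> nat \<Rightarrow> real) \<Rightarrow> nat \<Rightarrow> (real^'d \<Rightarrow> real)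
    \<Rightarrow> ('d \<Rightarrow> nat \<Rightarrow> real) \<Rightarrow> ereal" where
  "concQ a n \<phi> = conc_mat (Qset a n) (phibar \<phi> n)"

definition xi :: "(nat \<Rightarrow> real) \<Rightarrow> nat \<Rightarrow> (nat \<Rightarrow> ereal) \<Rightarrow> real \<Rightarrow> ereal" where
  "xi ai n ui b = (if \<exists>j\<le>n. ai j = b then ui (THE j. j \<le> n \<and> ai j = b) else -\<infinity>)"

definition conc_xi :: "(nat \<Rightarrow> real) \<Rightarrow> nat \<Rightarrow> (nat \<Rightarrow> ereal) \<Rightarrow> real \<Rightarrow> ereal" where
  "conc_xi ai n ui = conc_line {ai 0 .. ai n} (xi ai n ui)"

definition Zmap :: "('d \<Rightarrow> nat \<Rightarrow> real) \<Rightarrow> ('d \<Rightarrow> nat \<Rightarrow> real) \<Rightarrow> 'd \<Rightarrow> nat \<Rightarrow> real" where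
  "Zmap a s i j = (if j = 0 then 1 else (s i j - s i (j - 1)) / (a i j - a i (j - 1)))"

definition Inc1 :: "('d \<Rightarrow> nat \<Rightarrow> nat) \<Rightarrow> ('d \<Rightarrow> nat) \<Rightarrow> nat
    \<Rightarrow> ('d \<Rightarrow> nat \<Rightarrow> real) \<Rightarrow> ('d \<Rightarrow> nat \<Rightarrow> real) \<Rightarrow> bool" where
  "Inc1 \<tau> l n z \<delta> \<longleftrightarrow> (\<forall>i.
      z i 0 = 1 \<and> (\<forall>j<n. z i (Suc j) \<le> z i j) \<and> 0 \<le> z i n \<and>
      (\<forall>t\<in>{1..<l i}. \<delta> i t \<in> {0, 1} \<and> z i (\<tau> i t + 1) \<le> \<delta> i t \<and> \<delta> i t \<le> z i (\<tau> i t)))"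

text \<open>The three value functions (max read as supremum in the extended reals).
  s ranges over d x (n+1) matrices with last column s_{.n} = fn.\<close>
definition varphi :: "('d \<Rightarrow> nat \<Rightarrow> real) \<Rightarrow> nat \<Rightarrow> (real^'d \<Rightarrow> real)
    \<Rightarrow> ('x \<Rightarrow> 'd \<Rightarrow> nat \<Rightarrow> real) \<Rightarrow> ('x \<times> (real^'d)) set \<Rightarrow> 'x \<Rightarrow> real^'d \<Rightarrow> ereal" where
  "varphi a n \<phi> u W x fn = Sup {concQ a n \<phi> s | s. is_mat n s \<and> (\<forall>i. s i n = fn $ i) \<and>
      (\<forall>i j. j < n \<longrightarrow> u x i j \<le> s i j) \<and> (x, fn) \<in> W}"

definition varphi_Hm :: "('d \<Rightarrow> nat \<Rightarrow> real) \<Rightarrow> nat \<Rightarrow> ('d \<Rightarrow> nat \<Rightarrow> nat) \<Rightarrow> ('d \<Rightarrow> nat)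
    \<Rightarrow> (real^'d \<Rightarrow> real) \<Rightarrow> ('x \<times> (real^'d)) set \<Rightarrow> 'x \<Rightarrow> real^'d \<Rightarrow> ereal" where
  "varphi_Hm a n \<tau> l \<phi> W x fn = Sup {concQ a n \<phi> s | s. is_mat n s \<and> (\<forall>i. s i n = fn $ i) \<and>
      (\<exists>\<delta>. Inc1 \<tau> l n (Zmap a s) \<delta>) \<and> (x, fn) \<in> W}"

definition varphi_H :: "('d \<Rightarrow> nat \<Rightarrow> real) \<Rightarrow> nat \<Rightarrow> ('d \<Rightarrow> nat \<Rightarrow> nat) \<Rightarrow> ('d \<Rightarrow> nat)
    \<Rightarrow> (real^'d \<Rightarrow> real) \<Rightarrow> ('x \<Rightarrow> 'd \<Rightarrow> nat \<Rightarrow> real) \<Rightarrow> ('x \<times> (real^'d)) set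
    \<Rightarrow> 'x \<Rightarrow> real^'d \<Rightarrow> ereal" where
  "varphi_H a n \<tau> l \<phi> u W x fn = Sup {concQ a n \<phi> s | s. is_mat n s \<and> (\<forall>i. s i n = fn $ i) \<and>
      (\<exists>\<delta>. Inc1 \<tau> l n (Zmap a s) \<delta>) \<and> (\<forall>i j. j < n \<longrightarrow> u x i j \<le> s i j) \<and> (x, fn) \<in> W}"

definition env_mat :: "('d \<Rightarrow> nat \<Rightarrow> real) \<Rightarrow> nat \<Rightarrow> ('d \<Rightarrow> nat \<Rightarrow> ereal) \<Rightarrow> 'd \<Rightarrow> nat \<Rightarrow> real" where
  "env_mat a n U i j = (if j \<le> n then real_of_ereal (conc_xi (a i) n (U i) (a i j)) else 0)"

end

theory Submission
  imports Defs
begin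


definition Fm :: "(nat \<Rightarrow> real) \<Rightarrow> nat \<Rightarrow> (nat \<Rightarrow> real) \<Rightarrow> real \<Rightarrow> real" where
  "Fm b n \<mu> x = (\<Sum>j\<le>n. \<mu> j * min x (b j))"

definition isdist :: "nat \<Rightarrow> (nat \<Rightarrow> real) \<Rightarrow> bool" where
  "isdist n \<mu> \<longleftrightarrow> (\<forall>j\<le>n. 0 \<le> \<mu> j) \<and> (\<Sum>j\<le>n. \<mu> j) = 1"

definition smono :: "(nat \<Rightarrow> real) \<Rightarrow> nat \<Rightarrow> bool" where
  "smono b n \<longleftrightarrow> (\<forall>j<n. b j < b (Suc j))"

lemma smono_lt: assumes "smono b n" "j < k" "k \<le> n" shows "b j < b k"
  using assms(2,3)
proof (induction k)
  case 0 then show ?case by simp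
next
  case (Suc k)
  have "b k < b (Suc k)" using assms(1) Suc.prems unfolding smono_def by auto
  then show ?case using Suc by (cases "j = k") auto
qed

lemma smono_le: assumes "smono b n" "j \<le> k" "k \<le> n" shows "b j \<le> b k"
  using smono_lt[OF assms(1)] assms by (cases "j = k") (auto intro: less_imp_le)

lemma Fm_b0: assumes "isdist n \<mu>" "smono b n" shows "Fm b n \<mu> (b 0) = b 0"
proof -
  have "Fm b n \<mu> (b 0) = (\<Sum>j\<le>n. \<mu> j * b 0)"
    unfolding Fm_def by (intro sum.cong refl) (use smono_le[OF assms(2)] in \<open>auto simp: min_def\<close>)
  also have "\<dots> = b 0" using assms(1) by (simp add: isdist_def flip: sum_distrib_right)
  finally show ?thesis .
qed

lemma Fm_le_x: assumes "isdist n \<mu>" shows "Fm b n \<mu> x \<le> x"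
proof -
  have "Fm b n \<mu> x \<le> (\<Sum>j\<le>n. \<mu> j * x)"
    unfolding Fm_def using assms by (intro sum_mono mult_left_mono) (auto simp: isdist_def)
  also have "\<dots> = x" using assms by (simp add: isdist_def flip: sum_distrib_right)
  finally show ?thesis .
qed

lemma Fm_mono: assumes "isdist n \<mu>" "x \<le> y" shows "Fm b n \<mu> x \<le> Fm b n \<mu> y"
  unfolding Fm_def using assms by (intro sum_mono mult_left_mono) (auto simp: isdist_def)

lemma Fm_lip: assumes "isdist n \<mu>" "x \<le> y" shows "Fm b n \<mu> y - Fm b n \<mu> x \<le> y - x"
proof -
  have "Fm b n \<mu> y - Fm b n \<mu> x = (\<Sum>j\<le>n. \<mu> j * (min y (b j) - min x (b j)))"
    unfolding Fm_def by (simp add: sum_subtractf right_diff_distrib)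
  also have "\<dots> \<le> (\<Sum>j\<le>n. \<mu> j * (y - x))"
    using assms by (intro sum_mono mult_left_mono) (auto simp: isdist_def)
  also have "\<dots> = y - x" using assms by (simp add: isdist_def flip: sum_distrib_right)
  finally show ?thesis .
qed

lemma Fm_concave: assumes "isdist n \<mu>" "0 \<le> t" "t \<le> 1"
  shows "t * Fm b n \<mu> x + (1 - t) * Fm b n \<mu> y \<le> Fm b n \<mu> (t * x + (1 - t) * y)"
proof -
  have m: "t * min x c + (1 - t) * min y c \<le> min (t * x + (1 - t) * y) c" for c
  proof -
    have "t * min x c \<le> t * x" "(1 - t) * min y c \<le> (1 - t) * y"
      "t * min x c \<le> t * c" "(1 - t) * min y c \<le> (1 - t) * c"
      using assms by (auto intro: mult_left_mono)
    then show ?thesis by (auto simp: algebra_simps)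
  qed
  have "t * Fm b n \<mu> x + (1 - t) * Fm b n \<mu> y = (\<Sum>j\<le>n. \<mu> j * (t * min x (b j) + (1 - t) * min y (b j)))"
    unfolding Fm_def sum_distrib_left by (subst sum.distrib[symmetric]) (rule sum.cong, auto simp: algebra_simps)
  also have "\<dots> \<le> Fm b n \<mu> (t * x + (1 - t) * y)"
    unfolding Fm_def using assms m by (intro sum_mono mult_left_mono) (auto simp: isdist_def)
  finally show ?thesis .
qed

lemma Fm_concave_on: assumes "isdist n \<mu>" "convex S" shows "convex_on S (\<lambda>x. - Fm b n \<mu> x)"
proof (rule convex_onI[OF _ assms(2)])
  fix t x y :: real assume "0 < t" "t < 1"
  then show "- Fm b n \<mu> ((1 - t) *\<^sub>R x + t *\<^sub>R y) \<le> (1 - t) * - Fm b n \<mu> x + t * - Fm b n \<mu> y"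
    using Fm_concave[OF assms(1), where t="1 - t" and x=x and y=y and b=b] by simp
qed

definition tail :: "nat \<Rightarrow> (nat \<Rightarrow> real) \<Rightarrow> nat \<Rightarrow> real" where
  "tail n \<mu> k = (\<Sum>j\<in>{k..n}. \<mu> j)"

lemma Fm_step: assumes "smono b n" "k < n"
  shows "Fm b n \<mu> (b (Suc k)) - Fm b n \<mu> (b k) = tail n \<mu> (Suc k) * (b (Suc k) - b k)"
proof -
  have "Fm b n \<mu> (b (Suc k)) - Fm b n \<mu> (b k) = (\<Sum>j\<le>n. \<mu> j * (min (b (Suc k)) (b j) - min (b k) (b j)))"
    unfolding Fm_def by (simp add: sum_subtractf right_diff_distrib)
  also have "\<dots> = (\<Sum>j\<le>n. if j \<in> {Suc k..n} then \<mu> j * (b (Suc k) - b k) else 0)"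
  proof (intro sum.cong refl)
    fix j assume j: "j \<in> {..n}"
    show "\<mu> j * (min (b (Suc k)) (b j) - min (b k) (b j)) = (if j \<in> {Suc k..n} then \<mu> j * (b (Suc k) - b k) else 0)"
    proof (cases "Suc k \<le> j")
      case True
      then have "b (Suc k) \<le> b j" "b k \<le> b j" using smono_le[OF assms(1)] j assms by auto
      then show ?thesis using True j by (simp add: min_def)
    next
      case False
      then have "b j \<le> b k" "b j \<le> b (Suc k)" using smono_le[OF assms(1)] j assms by auto
      then show ?thesis using False by (simp add: min_def)
    qed
  qed
  also have "\<dots> = (\<Sum>j\<in>{Suc k..n}. \<mu> j * (b (Suc k) - b k))"
    by (subst sum.If_cases) (auto intro: sum.cong)
  also have "\<dots> = tail n \<mu> (Suc k) * (b (Suc k) - b k)"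
    unfolding tail_def by (simp add: sum_distrib_right)
  finally show ?thesis .
qed



definition rowQ :: "(nat \<Rightarrow> real) \<Rightarrow> nat \<Rightarrow> (nat \<Rightarrow> real) \<Rightarrow> (nat \<Rightarrow> real) \<Rightarrow> bool" where
  "rowQ b n \<mu> t \<longleftrightarrow> isdist n \<mu> \<and> (\<forall>k\<le>n. t k = Fm b n \<mu> (b k))"

lemma Qset_iff:
  assumes sm: "\<forall>i. smono (a i) n"
  shows "s \<in> Qset a n \<longleftrightarrow> (\<forall>i. (\<exists>\<mu>. rowQ (a i) n \<mu> (s i)) \<and> (\<forall>k>n. s i k = 0))"
proof -
  have v: "(\<Sum>j\<le>n. \<mu> j * vvec a n i j k) = (if k \<le> n then Fm (a i) n \<mu> (a i k) else 0)" for \<mu> i k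
  proof (cases "k \<le> n")
    case True
    have "a i (min k j) = min (a i k) (a i j)" if "j \<le> n" for j
      using smono_le[OF sm[rule_format, of i], of j k] smono_le[OF sm[rule_format, of i], of k j] that True
      by (cases "k \<le> j") (auto simp: min_def)
    then show ?thesis using True unfolding Fm_def vvec_def by (auto intro: sum.cong)
  qed (simp add: vvec_def)
  show ?thesis
  proof
    assume "s \<in> Qset a n"
    then have h: "\<forall>i. \<exists>\<mu>. (\<forall>j\<le>n. 0 \<le> \<mu> j) \<and> (\<Sum>j\<le>n. \<mu> j) = 1 \<and> s i = (\<lambda>k. \<Sum>j\<le>n. \<mu> j * vvec a n i j k)"
      unfolding Qset_def by blast
    show "\<forall>i. (\<exists>\<mu>. rowQ (a i) n \<mu> (s i)) \<and> (\<forall>k>n. s i k = 0)"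
    proof
      fix i
      obtain \<mu> where m: "(\<forall>j\<le>n. 0 \<le> \<mu> j)" "(\<Sum>j\<le>n. \<mu> j) = 1" "s i = (\<lambda>k. \<Sum>j\<le>n. \<mu> j * vvec a n i j k)"
        using h by blast
      then show "(\<exists>\<mu>. rowQ (a i) n \<mu> (s i)) \<and> (\<forall>k>n. s i k = 0)"
        unfolding rowQ_def isdist_def using v by auto
    qed
  next
    assume h: "\<forall>i. (\<exists>\<mu>. rowQ (a i) n \<mu> (s i)) \<and> (\<forall>k>n. s i k = 0)"
    show "s \<in> Qset a n" unfolding Qset_def
    proof (safe)
      fix i
      obtain \<mu> where m: "rowQ (a i) n \<mu> (s i)" using h by blast
      have "s i = (\<lambda>k. \<Sum>j\<le>n. \<mu> j * vvec a n i j k)"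
      proof
        fix k show "s i k = (\<Sum>j\<le>n. \<mu> j * vvec a n i j k)"
          using m h v[of \<mu> i k] unfolding rowQ_def by (cases "k \<le> n") auto
      qed
      then show "\<exists>\<mu>. (\<forall>j\<le>n. 0 \<le> \<mu> j) \<and> sum \<mu> {..n} = 1 \<and> s i = (\<lambda>k. \<Sum>j\<le>n. \<mu> j * vvec a n i j k)"
        using m unfolding rowQ_def isdist_def by blast
    qed
  qed
qed

lemma tail_Suc: "k \<le> n \<Longrightarrow> tail n \<mu> k = \<mu> k + tail n \<mu> (Suc k)"
  unfolding tail_def by (simp add: sum.atLeast_Suc_atMost)

lemma tail_0: "isdist n \<mu> \<Longrightarrow> tail n \<mu> 0 = 1"
  unfolding tail_def isdist_def by (simp add: atLeast0AtMost)

lemma tail_nonneg: "isdist n \<mu> \<Longrightarrow> 0 \<le> tail n \<mu> k"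
  unfolding tail_def isdist_def by (auto intro: sum_nonneg)

lemma tail_anti: assumes "isdist n \<mu>" "j \<le> k" shows "tail n \<mu> k \<le> tail n \<mu> j"
  unfolding tail_def using assms unfolding isdist_def by (intro sum_mono2) auto

lemma tail_le1: "isdist n \<mu> \<Longrightarrow> tail n \<mu> k \<le> 1"
  using tail_anti[of n \<mu> 0 k] tail_0 by auto

lemma tail_ge1: assumes "isdist n \<mu>" "1 \<le> tail n \<mu> p" "m < p" "m \<le> n" shows "\<mu> m = 0"
proof -
  have "(\<Sum>j\<le>n. \<mu> j) = (\<Sum>j\<in>{..n} - {p..n}. \<mu> j) + tail n \<mu> p"
    unfolding tail_def by (subst sum.subset_diff[of "{p..n}"]) auto
  then have z: "(\<Sum>j\<in>{..n} - {p..n}. \<mu> j) \<le> 0" using assms unfolding isdist_def by auto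
  have "\<forall>j\<in>{..n} - {p..n}. \<mu> j = 0"
    using sum_nonneg_eq_0_iff[of "{..n} - {p..n}" \<mu>] z assms(1) unfolding isdist_def
    by (smt (verit, best) DiffD1 atMost_iff finite_Diff finite_atMost sum_nonneg)
  then show ?thesis using assms(3,4) by auto
qed

lemma tail_le0: assumes "isdist n \<mu>" "tail n \<mu> p \<le> 0" "p \<le> m" "m \<le> n" shows "\<mu> m = 0"
proof -
  have "\<forall>j\<in>{p..n}. \<mu> j = 0"
    using sum_nonneg_eq_0_iff[of "{p..n}" \<mu>] assms unfolding isdist_def tail_def
    by (smt (verit) atLeastAtMost_iff finite_atLeastAtMost sum_nonneg)
  then show ?thesis using assms by auto
qed

lemma Fm_low: assumes "smono b n" "\<forall>m<p. \<mu> m = 0" "isdist n \<mu>" "x \<le> b p" "p \<le> n"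
  shows "Fm b n \<mu> x = x"
proof -
  have "Fm b n \<mu> x = (\<Sum>j\<le>n. \<mu> j * x)"
    unfolding Fm_def
  proof (intro sum.cong refl)
    fix j assume "j \<in> {..n}"
    then show "\<mu> j * min x (b j) = \<mu> j * x"
      using assms smono_le[OF assms(1), of p j] by (cases "j < p") (auto simp: min_def)
  qed
  also have "\<dots> = x" using assms by (simp add: isdist_def flip: sum_distrib_right)
  finally show ?thesis .
qed

lemma Fm_high: assumes "smono b n" "\<forall>m. p < m \<longrightarrow> m \<le> n \<longrightarrow> \<mu> m = 0" "b p \<le> x" "p \<le> n"
  shows "Fm b n \<mu> x = Fm b n \<mu> (b p)"
  unfolding Fm_def
proof (intro sum.cong refl)
  fix j assume "j \<in> {..n}"
  then show "\<mu> j * min x (b j) = \<mu> j * min (b p) (b j)"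
    using assms smono_le[OF assms(1), of j p] by (cases "p < j") (auto simp: min_def)
qed

lemma Zrow: assumes "smono b n" "rowQ b n \<mu> t" "1 \<le> j" "j \<le> n"
  shows "(t j - t (j - 1)) / (b j - b (j - 1)) = tail n \<mu> j"
proof -
  obtain k where k: "j = Suc k" using assms(3) by (cases j) auto
  have "b k < b (Suc k)" using assms k smono_lt by auto
  then show ?thesis using Fm_step[OF assms(1), of k \<mu>] assms k unfolding rowQ_def by auto
qed

lemma rowQ_char:
  assumes sm: "smono b n" and n1: "1 \<le> n" and t0: "t 0 = b 0"
    and z1: "(t 1 - t 0) / (b 1 - b 0) \<le> 1"
    and zm: "\<forall>j. 1 \<le> j \<longrightarrow> j < n \<longrightarrow> (t (Suc j) - t j) / (b (Suc j) - b j) \<le> (t j - t (j - 1)) / (b j - b (j - 1))"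
    and zn: "0 \<le> (t n - t (n - 1)) / (b n - b (n - 1))"
  shows "\<exists>\<mu>. rowQ b n \<mu> t"
proof -
  define Z where "Z j = (if j = 0 then 1 else if j \<le> n then (t j - t (j - 1)) / (b j - b (j - 1)) else 0)" for j
  define \<mu> where "\<mu> j = Z j - Z (Suc j)" for j
  have tl: "tail n \<mu> k = Z k" if "k \<le> n" for k
  proof -
    have "tail n \<mu> k = - (\<Sum>i = k..n. Z (Suc i) - Z i)"
      unfolding tail_def \<mu>_def by (simp add: sum_negf[symmetric])
    also have "\<dots> = Z k - Z (Suc n)" using that by (subst sum_Suc_diff) auto
    finally show ?thesis by (simp add: Z_def)
  qed
  have nn: "0 \<le> \<mu> j" for j
  proof -
    consider "j = 0" | "1 \<le> j \<and> j < n" | "j = n" | "n < j" by linarith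
    then show ?thesis
    proof cases
      case 1 then show ?thesis using z1 n1 by (auto simp: \<mu>_def Z_def)
    next
      case 2 then show ?thesis using zm by (auto simp: \<mu>_def Z_def)
    next
      case 3 then show ?thesis using zn n1 by (auto simp: \<mu>_def Z_def)
    qed (auto simp: \<mu>_def Z_def)
  qed
  have d: "isdist n \<mu>"
    using tl[of 0] nn unfolding isdist_def tail_def by (auto simp: Z_def atLeast0AtMost)
  have "t k = Fm b n \<mu> (b k)" if "k \<le> n" for k
    using that
  proof (induction k)
    case 0 then show ?case using Fm_b0[OF d sm] t0 by simp
  next
    case (Suc k)
    have "b k < b (Suc k)" using sm Suc.prems smono_lt by auto
    then show ?case using Fm_step[OF sm, of k \<mu>] Suc tl[of "Suc k"] by (auto simp: Z_def)
  qed
  then show ?thesis using d unfolding rowQ_def by blast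
qed



definition lam :: "(nat \<Rightarrow> real) \<Rightarrow> nat \<Rightarrow> nat \<Rightarrow> nat \<Rightarrow> real" where
  "lam b p q j = (b q - b j) / (b q - b p)"
definition ind :: "nat \<Rightarrow> nat \<Rightarrow> real" where
  "ind a m = (if m = a then 1 else 0)"
definition K1 :: "(nat \<Rightarrow> real) \<Rightarrow> nat \<Rightarrow> nat \<Rightarrow> nat \<Rightarrow> nat \<Rightarrow> real" where
  "K1 b p q j m = (if p < j \<and> j < q then lam b p q j * ind p m + (1 - lam b p q j) * ind q m else ind j m)"
definition Kt :: "(nat \<Rightarrow> real) \<Rightarrow> nat \<Rightarrow> nat \<Rightarrow> real \<Rightarrow> nat \<Rightarrow> nat \<Rightarrow> real" where
  "Kt b p q \<theta> j m = (1 - \<theta>) * ind j m + \<theta> * K1 b p q j m"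
definition Tf :: "(nat \<Rightarrow> real) \<Rightarrow> nat \<Rightarrow> nat \<Rightarrow> nat \<Rightarrow> (nat \<Rightarrow> real) \<Rightarrow> real \<Rightarrow> real" where
  "Tf b n p q \<mu> x = (\<Sum>j\<le>n. \<mu> j * (if p < j \<and> j < q then lam b p q j * min x (b p) + (1 - lam b p q j) * min x (b q) else min x (b j)))"
definition push :: "nat \<Rightarrow> (nat \<Rightarrow> real) \<Rightarrow> (nat \<Rightarrow> nat \<Rightarrow> real) \<Rightarrow> nat \<Rightarrow> real" where
  "push n \<mu> K m = (\<Sum>j\<le>n. \<mu> j * K j m)"

lemma sum_ind: "a \<le> n \<Longrightarrow> (\<Sum>m\<le>n. ind a m * g m) = g a"
  unfolding ind_def by (simp add: if_distrib if_distribR cong: if_cong)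

lemma Kt_apply: assumes "j \<le> n" "q \<le> n" "p < q"
  shows "(\<Sum>m\<le>n. Kt b p q \<theta> j m * g m) = (1 - \<theta>) * g j + \<theta> * (if p < j \<and> j < q then lam b p q j * g p + (1 - lam b p q j) * g q else g j)"
proof -
  have "(\<Sum>m\<le>n. Kt b p q \<theta> j m * g m) = (\<Sum>m\<le>n. (1 - \<theta>) * (ind j m * g m) + \<theta> * (K1 b p q j m * g m))"
    unfolding Kt_def by (intro sum.cong refl) (simp add: algebra_simps)
  also have "\<dots> = (1 - \<theta>) * (\<Sum>m\<le>n. ind j m * g m) + \<theta> * (\<Sum>m\<le>n. K1 b p q j m * g m)"
    by (simp add: sum.distrib sum_distrib_left)
  also have "(\<Sum>m\<le>n. K1 b p q j m * g m) = (if p < j \<and> j < q then lam b p q j * g p + (1 - lam b p q j) * g q else g j)"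
  proof (cases "p < j \<and> j < q")
    case True
    have "(\<Sum>m\<le>n. K1 b p q j m * g m) = (\<Sum>m\<le>n. lam b p q j * (ind p m * g m) + (1 - lam b p q j) * (ind q m * g m))"
      unfolding K1_def using True by (intro sum.cong refl) (simp add: algebra_simps)
    also have "\<dots> = lam b p q j * (\<Sum>m\<le>n. ind p m * g m) + (1 - lam b p q j) * (\<Sum>m\<le>n. ind q m * g m)"
      by (simp add: sum.distrib sum_distrib_left)
    finally have "(\<Sum>m\<le>n. K1 b p q j m * g m) = lam b p q j * (\<Sum>m\<le>n. ind p m * g m) + (1 - lam b p q j) * (\<Sum>m\<le>n. ind q m * g m)" .
    then show ?thesis using True assms by (simp add: sum_ind)
  next
    case False
    then have "K1 b p q j m = ind j m" for m by (simp only: K1_def if_not_P[OF False] if_False)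
    then have "(\<Sum>m\<le>n. K1 b p q j m * g m) = g j" using assms by (simp add: sum_ind)
    then show ?thesis by (simp only: if_not_P[OF False])
  qed
  finally show ?thesis using assms by (simp add: sum_ind)
qed

lemma lam_bounds: assumes "smono b n" "p < j" "j < q" "q \<le> n"
  shows "0 \<le> lam b p q j" "lam b p q j \<le> 1"
proof -
  have "b p < b j" "b j < b q" using smono_lt[OF assms(1)] assms by auto
  then show "0 \<le> lam b p q j" "lam b p q j \<le> 1" unfolding lam_def by (auto simp: field_simps)
qed

lemma lam_comb: assumes "b p < b q" shows "lam b p q j * b p + (1 - lam b p q j) * b q = b j"
proof -
  have h: "lam b p q j * (b q - b p) = b q - b j" using assms unfolding lam_def by simp
  have g: "lam b p q j * b p + (1 - lam b p q j) * b q = b q - lam b p q j * (b q - b p)" by (simp add: algebra_simps)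
  show ?thesis using g h by simp
qed

lemma Kt_nonneg: assumes "smono b n" "q \<le> n" "0 \<le> \<theta>" "\<theta> \<le> 1"
  shows "0 \<le> Kt b p q \<theta> j m"
proof -
  have "0 \<le> K1 b p q j m"
    unfolding K1_def using lam_bounds[OF assms(1), of p j q] assms by (auto simp: ind_def)
  then show ?thesis unfolding Kt_def using assms by (auto simp: ind_def)
qed

lemma Kt_sum1: assumes "j \<le> n" "q \<le> n" "p < q" shows "(\<Sum>m\<le>n. Kt b p q \<theta> j m) = 1"
  using Kt_apply[OF assms, of b \<theta> "\<lambda>_. 1"] by simp

lemma Kt_mart: assumes "smono b n" "j \<le> n" "q \<le> n" "p < q" shows "(\<Sum>m\<le>n. Kt b p q \<theta> j m * b m) = b j"
proof -
  have "b p < b q" using smono_lt[OF assms(1)] assms by auto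
  have "(\<Sum>m\<le>n. Kt b p q \<theta> j m * b m) = (1 - \<theta>) * b j + \<theta> * (if p < j \<and> j < q then lam b p q j * b p + (1 - lam b p q j) * b q else b j)"
    by (rule Kt_apply[OF assms(2-4)])
  also have "\<dots> = (1 - \<theta>) * b j + \<theta> * b j" using lam_comb[OF \<open>b p < b q\<close>, of j] by simp
  finally show ?thesis by (simp add: algebra_simps)
qed

lemma push_dist: assumes "isdist n \<mu>" "\<And>j m. 0 \<le> K j m" "\<And>j. j \<le> n \<Longrightarrow> (\<Sum>m\<le>n. K j m) = 1"
  shows "isdist n (push n \<mu> K)"
proof -
  have "(\<Sum>m\<le>n. push n \<mu> K m) = (\<Sum>j\<le>n. \<mu> j * (\<Sum>m\<le>n. K j m))"
    unfolding push_def by (subst sum.swap) (simp add: sum_distrib_left)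
  also have "\<dots> = 1" using assms(1,3) unfolding isdist_def by simp
  finally show ?thesis using assms unfolding isdist_def push_def by (auto intro: sum_nonneg)
qed

lemma push_apply: "(\<Sum>m\<le>n. push n \<mu> K m * g m) = (\<Sum>j\<le>n. \<mu> j * (\<Sum>m\<le>n. K j m * g m))"
  unfolding push_def sum_distrib_right sum_distrib_left by (subst sum.swap) (simp add: mult.assoc)

lemma Fm_push_Kt: assumes "q \<le> n" "p < q"
  shows "Fm b n (push n \<mu> (Kt b p q \<theta>)) x = (1 - \<theta>) * Fm b n \<mu> x + \<theta> * Tf b n p q \<mu> x"
proof -
  have "Fm b n (push n \<mu> (Kt b p q \<theta>)) x = (\<Sum>j\<le>n. \<mu> j * (\<Sum>m\<le>n. Kt b p q \<theta> j m * min x (b m)))"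
    unfolding Fm_def by (rule push_apply)
  also have "\<dots> = (\<Sum>j\<le>n. (1 - \<theta>) * (\<mu> j * min x (b j)) + \<theta> * (\<mu> j * (if p < j \<and> j < q then lam b p q j * min x (b p) + (1 - lam b p q j) * min x (b q) else min x (b j))))"
  proof (intro sum.cong refl)
    fix j assume "j \<in> {..n}"
    then have h: "(\<Sum>m\<le>n. Kt b p q \<theta> j m * min x (b m)) = (1 - \<theta>) * min x (b j) + \<theta> * (if p < j \<and> j < q then lam b p q j * min x (b p) + (1 - lam b p q j) * min x (b q) else min x (b j))"
      using Kt_apply[OF _ assms, of j b \<theta> "\<lambda>m. min x (b m)"] by simp
    have e: "\<And>A B::real. \<mu> j * ((1-\<theta>)*A + \<theta>*B) = (1-\<theta>)*(\<mu> j*A) + \<theta>*(\<mu> j * B)" by (simp add: algebra_simps)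
    show "\<mu> j * (\<Sum>m\<le>n. Kt b p q \<theta> j m * min x (b m)) = (1 - \<theta>) * (\<mu> j * min x (b j)) + \<theta> * (\<mu> j * (if p < j \<and> j < q then lam b p q j * min x (b p) + (1 - lam b p q j) * min x (b q) else min x (b j)))"
      by (simp only: h e)
  qed
  also have "\<dots> = (1 - \<theta>) * Fm b n \<mu> x + \<theta> * Tf b n p q \<mu> x"
    unfolding Fm_def Tf_def by (simp only: sum.distrib sum_distrib_left)
  finally show ?thesis .
qed



lemma Tf_out: assumes "smono b n" "k \<le> n" "k \<le> p \<or> q \<le> k" "q \<le> n" "p < q"
  shows "Tf b n p q \<mu> (b k) = Fm b n \<mu> (b k)"
  unfolding Tf_def Fm_def
proof (intro sum.cong refl)
  fix j assume j: "j \<in> {..n}"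
  have bpq: "b p < b q" using smono_lt[OF assms(1)] assms by auto
  show "\<mu> j * (if p < j \<and> j < q then lam b p q j * min (b k) (b p) + (1 - lam b p q j) * min (b k) (b q) else min (b k) (b j)) = \<mu> j * min (b k) (b j)"
  proof (cases "p < j \<and> j < q")
    case True
    then have "b p < b j" "b j < b q" using smono_lt[OF assms(1)] assms by auto
    show ?thesis
    proof (cases "k \<le> p")
      case True
      then have "b k \<le> b p" using smono_le[OF assms(1)] assms by auto
      then have "min (b k) (b p) = b k" "min (b k) (b q) = b k" "min (b k) (b j) = b k"
        using \<open>b p < b j\<close> \<open>b j < b q\<close> by auto
      then show ?thesis using \<open>p < j \<and> j < q\<close> by (simp add: algebra_simps)
    next
      case False
      then have "b q \<le> b k" using smono_le[OF assms(1)] assms by auto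
      then have "min (b k) (b p) = b p" "min (b k) (b q) = b q" "min (b k) (b j) = b j"
        using \<open>b p < b j\<close> \<open>b j < b q\<close> by auto
      then show ?thesis using \<open>p < j \<and> j < q\<close> lam_comb[OF bpq, of j] by simp
    qed
  next
    case False then show ?thesis by (simp only: if_not_P[OF False] if_False)
  qed
qed

lemma Tf_affine: assumes "smono b n" "p < k" "k < q" "q \<le> n"
  shows "Tf b n p q \<mu> (b k) = lam b p q k * Tf b n p q \<mu> (b p) + (1 - lam b p q k) * Tf b n p q \<mu> (b q)"
proof -
  have bpq: "b p < b k" "b k < b q" using smono_lt[OF assms(1)] assms by auto
  define L where "L = lam b p q k"
  have bk: "b k = L * b p + (1 - L) * b q" using lam_comb[of b p q k] bpq by (simp add: L_def)
  define h where "h j x = (if j \<le> p then b j else if q \<le> j then x else lam b p q j * b p + (1 - lam b p q j) * x)" for j x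
  have t: "(if p < j \<and> j < q then lam b p q j * min x (b p) + (1 - lam b p q j) * min x (b q) else min x (b j))
     = h j x"
    if "j \<le> n" "b p \<le> x" "x \<le> b q" for j x
  proof -
    consider "j \<le> p" | "q \<le> j" | "p < j \<and> j < q" by linarith
    then show ?thesis
    proof cases
      case 1 then have "b j \<le> b p" using smono_le[OF assms(1)] assms that by auto
      then show ?thesis using 1 that by (auto simp: min_def h_def)
    next
      case 2 then have "b q \<le> b j" using smono_le[OF assms(1)] assms that by auto
      then show ?thesis using 2 that assms by (auto simp: min_def h_def)
    next
      case 3 then show ?thesis using that by (auto simp: min_def h_def)
    qed
  qed
  have e: "Tf b n p q \<mu> x = (\<Sum>j\<le>n. \<mu> j * h j x)" if "b p \<le> x" "x \<le> b q" for x
    unfolding Tf_def using t that by (intro sum.cong refl) auto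
  have ha: "h j (b k) = L * h j (b p) + (1 - L) * h j (b q)" for j
    unfolding h_def by (auto simp: bk algebra_simps)
  have "Tf b n p q \<mu> (b k) = (\<Sum>j\<le>n. L * (\<mu> j * h j (b p)) + (1 - L) * (\<mu> j * h j (b q)))"
    using bpq by (subst e) (auto intro!: sum.cong simp: ha algebra_simps)
  also have "\<dots> = L * Tf b n p q \<mu> (b p) + (1 - L) * Tf b n p q \<mu> (b q)"
    using bpq by (simp add: e sum.distrib sum_distrib_left)
  finally show ?thesis unfolding L_def .
qed



lemma push_assoc: "push n \<mu> (\<lambda>j m. push n (K j) P m) m = push n (push n \<mu> K) P m"
  unfolding push_def sum_distrib_left sum_distrib_right by (subst sum.swap) (simp add: mult.assoc)

lemma dist_uniq: assumes sm: "smono b n" and d: "isdist n \<mu>" "isdist n \<mu>'"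
  and eq: "\<forall>k\<le>n. Fm b n \<mu> (b k) = Fm b n \<mu>' (b k)"
  shows "\<forall>m\<le>n. \<mu> m = \<mu>' m"
proof -
  have t: "tail n \<mu> k = tail n \<mu>' k" if "k \<le> Suc n" for k
  proof (cases k)
    case 0 then show ?thesis using tail_0 d by simp
  next
    case (Suc k')
    show ?thesis
    proof (cases "k' < n")
      case True
      have "b k' < b (Suc k')" using smono_lt[OF sm] True by auto
      then show ?thesis using Fm_step[OF sm True, of \<mu>] Fm_step[OF sm True, of \<mu>'] eq True Suc by auto
    next
      case False then have "k = Suc n" using that Suc by auto
      then show ?thesis by (simp add: tail_def)
    qed
  qed
  show ?thesis
  proof (intro allI impI)
    fix m assume "m \<le> n"
    then show "\<mu> m = \<mu>' m" using tail_Suc[of m n \<mu>] tail_Suc[of m n \<mu>'] t[of m] t[of "Suc m"] by auto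
  qed
qed

definition goodK :: "(nat \<Rightarrow> real) \<Rightarrow> nat \<Rightarrow> (nat \<Rightarrow> real) \<Rightarrow> (nat \<Rightarrow> real) \<Rightarrow> (nat \<Rightarrow> nat \<Rightarrow> real) \<Rightarrow> bool" where
  "goodK b n \<mu>' \<mu> \<pi> \<longleftrightarrow> (\<forall>j\<le>n. isdist n (\<pi> j) \<and> (\<Sum>m\<le>n. \<pi> j m * b m) = b j) \<and> (\<forall>m\<le>n. push n \<mu>' \<pi> m = \<mu> m)"

lemma strassen_aux:
  assumes sm: "smono b n" and d: "isdist n \<mu>"
  shows "isdist n \<mu>' \<Longrightarrow> (\<forall>k\<le>n. Fm b n \<mu> (b k) \<le> Fm b n \<mu>' (b k)) \<Longrightarrow> Fm b n \<mu> (b n) = Fm b n \<mu>' (b n)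
    \<Longrightarrow> card {k. k \<le> n \<and> Fm b n \<mu> (b k) < Fm b n \<mu>' (b k)} = N \<Longrightarrow> \<exists>\<pi>. goodK b n \<mu>' \<mu> \<pi>"
proof (induction N arbitrary: \<mu>' rule: less_induct)
  case (less N \<mu>')
  note d' = less.prems(1) and le = less.prems(2) and en = less.prems(3)
  let ?S = "\<lambda>\<nu>. {k. k \<le> n \<and> Fm b n \<mu> (b k) < Fm b n \<nu> (b k)}"
  show ?case
  proof (cases "?S \<mu>' = {}")
    case True
    then have "\<forall>k\<le>n. Fm b n \<mu> (b k) = Fm b n \<mu>' (b k)" using le by force
    then have u: "\<forall>m\<le>n. \<mu> m = \<mu>' m" using dist_uniq[OF sm d d'] by blast
    define \<pi> where "\<pi> j m = ind j m" for j m
    have "goodK b n \<mu>' \<mu> \<pi>"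
      unfolding goodK_def
    proof (intro conjI allI impI)
      fix j assume "j \<le> n"
      then show "isdist n (\<pi> j)" using sum_ind[of j n "\<lambda>_. 1"] by (auto simp: isdist_def \<pi>_def ind_def)
      show "(\<Sum>m\<le>n. \<pi> j m * b m) = b j" using sum_ind[OF \<open>j \<le> n\<close>] by (simp add: \<pi>_def)
    next
      fix m assume "m \<le> n"
      have "push n \<mu>' \<pi> m = \<mu>' m" unfolding push_def \<pi>_def ind_def using \<open>m \<le> n\<close> by (simp add: if_distrib cong: if_cong)
      then show "push n \<mu>' \<pi> m = \<mu> m" using u \<open>m \<le> n\<close> by simp
    qed
    then show ?thesis by blast
  next
    case False
    then obtain k0 where k0: "k0 \<le> n" "Fm b n \<mu> (b k0) < Fm b n \<mu>' (b k0)" by blast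
    define Eq where "Eq k \<longleftrightarrow> k \<le> n \<and> Fm b n \<mu> (b k) = Fm b n \<mu>' (b k)" for k
    have Eq0: "Eq 0" unfolding Eq_def using Fm_b0[OF d sm] Fm_b0[OF d' sm] by simp
    have Eqn: "Eq n" unfolding Eq_def using en by simp
    have "k0 \<noteq> 0" proof assume "k0 = 0" then show False using Eq0 k0 by (simp add: Eq_def) qed
    have "k0 \<noteq> n" proof assume "k0 = n" then show False using Eqn k0 by (simp add: Eq_def) qed
    define P where "P = {k. k < k0 \<and> Eq k}"
    define Qs where "Qs = {k. k0 < k \<and> Eq k}"
    have fP: "finite P" "P \<noteq> {}" unfolding P_def using Eq0 \<open>k0 \<noteq> 0\<close> by auto
    have fQ: "finite Qs" "Qs \<noteq> {}" unfolding Qs_def Eq_def using Eqn \<open>k0 \<noteq> n\<close> k0 Eqn by (auto simp: Eq_def)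
    define p where "p = Max P"
    define q where "q = Min Qs"
    have pP: "p \<in> P" using Max_in[OF fP] p_def by simp
    have qQ: "q \<in> Qs" using Min_in[OF fQ] q_def by simp
    have pk: "p < k0" "Eq p" using pP unfolding P_def by auto
    have qk: "k0 < q" "Eq q" using qQ unfolding Qs_def by auto
    have qn: "q \<le> n" using qk unfolding Eq_def by auto
    have pq: "p < q" using pk qk by simp
    have strict: "Fm b n \<mu> (b k) < Fm b n \<mu>' (b k)" if "p < k" "k < q" for k
    proof -
      have "\<not> Eq k"
      proof
        assume "Eq k"
        consider "k < k0" | "k = k0" | "k0 < k" by linarith
        then show False
        proof cases
          case 1 then have "k \<in> P" using \<open>Eq k\<close> by (simp add: P_def)
          then have "k \<le> p" using Max_ge[OF fP(1)] p_def by simp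
          then show False using that by simp
        next
          case 2 then show False using \<open>Eq k\<close> k0 by (simp add: Eq_def)
        next
          case 3 then have "k \<in> Qs" using \<open>Eq k\<close> by (simp add: Qs_def)
          then have "q \<le> k" using Min_le[OF fQ(1)] q_def by simp
          then show False using that by simp
        qed
      qed
      moreover have "k \<le> n" using that qn by simp
      ultimately show ?thesis using le unfolding Eq_def by (simp add: order_less_le)
    qed
    define T where "T = Tf b n p q \<mu>'"
    have Tout: "T (b k) = Fm b n \<mu>' (b k)" if "k \<le> n" "k \<le> p \<or> q \<le> k" for k
      unfolding T_def using Tf_out[OF sm that qn pq] .
    have Tle: "T (b k) \<le> Fm b n \<mu> (b k)" if "p < k" "k < q" for k
    proof -
      have l: "0 \<le> lam b p q k" "lam b p q k \<le> 1" using lam_bounds[OF sm that qn] by auto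
      have "b p < b q" using smono_lt[OF sm pq qn] .
      have "T (b k) = lam b p q k * T (b p) + (1 - lam b p q k) * T (b q)"
        unfolding T_def using Tf_affine[OF sm that qn] .
      also have "\<dots> = lam b p q k * Fm b n \<mu> (b p) + (1 - lam b p q k) * Fm b n \<mu> (b q)"
        using Tout[of p] Tout[of q] pk qk qn unfolding Eq_def by auto
      also have "\<dots> \<le> Fm b n \<mu> (lam b p q k * b p + (1 - lam b p q k) * b q)"
        by (rule Fm_concave[OF d l])
      also have "\<dots> = Fm b n \<mu> (b k)" using lam_comb[OF \<open>b p < b q\<close>, of k] by simp
      finally show ?thesis .
    qed
    define I where "I = {p<..<q}"
    have fI: "finite I" "I \<noteq> {}" unfolding I_def using pk qk by auto
    define r where "r k = (Fm b n \<mu>' (b k) - Fm b n \<mu> (b k)) / (Fm b n \<mu>' (b k) - T (b k))" for k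
    define \<theta> where "\<theta> = Min (r ` I)"
    have "\<theta> \<in> r ` I" unfolding \<theta>_def using fI by (intro Min_in) auto
    then obtain k1 where k1: "k1 \<in> I" "\<theta> = r k1" by blast
    have th_le: "\<theta> \<le> r k" if "k \<in> I" for k using Min_le[of "r ` I"] fI that \<theta>_def by auto
    have rpos: "0 < r k" "r k \<le> 1" if "k \<in> I" for k
    proof -
      have "p < k" "k < q" using that I_def by auto
      then have "Fm b n \<mu> (b k) < Fm b n \<mu>' (b k)" "T (b k) \<le> Fm b n \<mu> (b k)" using strict Tle by auto
      then show "0 < r k" "r k \<le> 1" unfolding r_def by (auto simp: field_simps)
    qed
    have th01: "0 \<le> \<theta>" "\<theta> \<le> 1" using rpos[OF k1(1)] k1 by auto
    define \<mu>'' where "\<mu>'' = push n \<mu>' (Kt b p q \<theta>)"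
    have d'': "isdist n \<mu>''" unfolding \<mu>''_def
      by (rule push_dist[OF d']) (use Kt_nonneg[OF sm qn th01] Kt_sum1[OF _ qn pq] in auto)
    have F'': "Fm b n \<mu>'' x = (1 - \<theta>) * Fm b n \<mu>' x + \<theta> * T x" for x
      unfolding \<mu>''_def T_def using Fm_push_Kt[OF qn pq] .
    have out'': "Fm b n \<mu>'' (b k) = Fm b n \<mu>' (b k)" if "k \<le> n" "k \<notin> I" for k
    proof -
      have "k \<le> p \<or> q \<le> k" using that I_def by auto
      then have "T (b k) = Fm b n \<mu>' (b k)" using Tout[OF that(1)] by blast
      then show ?thesis using F''[of "b k"] by (simp add: algebra_simps)
    qed
    have in'': "Fm b n \<mu> (b k) \<le> Fm b n \<mu>'' (b k)" "k = k1 \<Longrightarrow> Fm b n \<mu>'' (b k) = Fm b n \<mu> (b k)" if "k \<in> I" for k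
    proof -
      have "p < k" "k < q" using that I_def by auto
      then have D: "0 < Fm b n \<mu>' (b k) - T (b k)" using strict Tle by force
      have rD: "r k * (Fm b n \<mu>' (b k) - T (b k)) = Fm b n \<mu>' (b k) - Fm b n \<mu> (b k)"
        unfolding r_def using D by simp
      have "\<theta> * (Fm b n \<mu>' (b k) - T (b k)) \<le> r k * (Fm b n \<mu>' (b k) - T (b k))"
        using th_le[OF that] D by (intro mult_right_mono) auto
      then show "Fm b n \<mu> (b k) \<le> Fm b n \<mu>'' (b k)" using rD F''[of "b k"] by (simp add: algebra_simps)
      show "Fm b n \<mu>'' (b k) = Fm b n \<mu> (b k)" if "k = k1"
        using rD F''[of "b k"] k1 that by (simp add: algebra_simps)
    qed
    have le'': "\<forall>k\<le>n. Fm b n \<mu> (b k) \<le> Fm b n \<mu>'' (b k)"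
      using in''(1) out'' le by (metis)
    have I_n: "k \<in> I \<Longrightarrow> k \<le> n" for k using I_def qn by auto
    have en'': "Fm b n \<mu> (b n) = Fm b n \<mu>'' (b n)" using out''[of n] en I_def qn by auto
    have sub: "?S \<mu>'' \<subset> ?S \<mu>'"
    proof
      show "?S \<mu>'' \<subseteq> ?S \<mu>'"
      proof
        fix k assume "k \<in> ?S \<mu>''"
        then show "k \<in> ?S \<mu>'"
          using out''[of k] strict[of k] I_def by (cases "k \<in> I") auto
      qed
      have "k1 \<in> ?S \<mu>'" "k1 \<notin> ?S \<mu>''" using in''(2)[OF k1(1) refl] k1(1) strict[of k1] I_n[OF k1(1)] I_def by auto
      then show "?S \<mu>'' \<noteq> ?S \<mu>'" by blast
    qed
    have "card (?S \<mu>'') < N" using psubset_card_mono[OF _ sub] less.prems(4) by auto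
    then obtain \<pi>'' where g: "goodK b n \<mu>'' \<mu> \<pi>''" using less.IH[OF _ d'' le'' en''] by blast
    define \<pi> where "\<pi> j m = push n (Kt b p q \<theta> j) \<pi>'' m" for j m
    have "goodK b n \<mu>' \<mu> \<pi>"
      unfolding goodK_def
    proof (intro conjI allI impI)
      fix j assume j: "j \<le> n"
      have ap: "(\<Sum>m\<le>n. \<pi> j m * g m) = (\<Sum>r\<le>n. Kt b p q \<theta> j r * (\<Sum>m\<le>n. \<pi>'' r m * g m))" for g
        unfolding \<pi>_def by (rule push_apply)
      have "(\<Sum>m\<le>n. \<pi> j m) = (\<Sum>r\<le>n. Kt b p q \<theta> j r * 1)"
        using ap[of "\<lambda>_. 1"] g unfolding goodK_def isdist_def by (auto intro: sum.cong)
      then have s1: "(\<Sum>m\<le>n. \<pi> j m) = 1" using Kt_sum1[OF j qn pq] by simp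
      have nn: "0 \<le> \<pi> j m" if "m \<le> n" for m
        unfolding \<pi>_def push_def using g Kt_nonneg[OF sm qn th01] that unfolding goodK_def isdist_def
        by (auto intro!: sum_nonneg mult_nonneg_nonneg)
      show "isdist n (\<pi> j)" using s1 nn unfolding isdist_def by auto
      have "(\<Sum>m\<le>n. \<pi> j m * b m) = (\<Sum>r\<le>n. Kt b p q \<theta> j r * b r)"
        using ap[of b] g unfolding goodK_def by (auto intro: sum.cong)
      then show "(\<Sum>m\<le>n. \<pi> j m * b m) = b j" using Kt_mart[OF sm j qn pq] by simp
    next
      fix m assume "m \<le> n"
      have "push n \<mu>' \<pi> m = push n \<mu>'' \<pi>'' m" unfolding \<pi>_def \<mu>''_def by (rule push_assoc)
      then show "push n \<mu>' \<pi> m = \<mu> m" using g \<open>m \<le> n\<close> unfolding goodK_def by simp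
    qed
    then show ?thesis by blast
  qed
qed

lemma strassen:
  assumes "smono b n" "isdist n \<mu>" "isdist n \<mu>'" "\<forall>k\<le>n. Fm b n \<mu> (b k) \<le> Fm b n \<mu>' (b k)"
    "Fm b n \<mu> (b n) = Fm b n \<mu>' (b n)"
  shows "\<exists>\<pi>. goodK b n \<mu>' \<mu> \<pi>"
  using strassen_aux[OF assms(1,2,3,4,5) refl] .



lemma push_dist2: assumes "isdist n \<mu>" "\<And>j m. j \<le> n \<Longrightarrow> m \<le> n \<Longrightarrow> 0 \<le> K j m" "\<And>j. j \<le> n \<Longrightarrow> (\<Sum>m\<le>n. K j m) = 1"
  shows "isdist n (push n \<mu> K)"
proof -
  have "(\<Sum>m\<le>n. push n \<mu> K m) = (\<Sum>j\<le>n. \<mu> j * (\<Sum>m\<le>n. K j m))"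
    unfolding push_def by (subst sum.swap) (simp add: sum_distrib_left)
  also have "\<dots> = 1" using assms(1,3) unfolding isdist_def by simp
  finally show ?thesis using assms unfolding isdist_def push_def by (auto intro!: sum_nonneg)
qed

lemma Fm_cong: "(\<forall>m\<le>n. \<rho> m = \<rho>' m) \<Longrightarrow> Fm b n \<rho> x = Fm b n \<rho>' x"
  unfolding Fm_def by (intro sum.cong) auto

lemma Fm_lin: "Fm b n (\<lambda>m. \<Sum>k\<in>K. c k * \<nu> k m) x = (\<Sum>k\<in>K. c k * Fm b n (\<nu> k) x)"
  unfolding Fm_def sum_distrib_left sum_distrib_right by (subst sum.swap) (simp add: mult.assoc)

lemma push_lin: "(\<Sum>k\<in>K. c k * push n (\<nu> k) P m) = push n (\<lambda>r. \<Sum>k\<in>K. c k * \<nu> k r) P m"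
  unfolding push_def sum_distrib_left sum_distrib_right by (subst sum.swap) (simp add: mult.assoc)

lemma Fm_top: assumes "smono b n" shows "Fm b n \<rho> (b n) = (\<Sum>m\<le>n. \<rho> m * b m)"
  unfolding Fm_def
proof (intro sum.cong refl)
  fix m assume "m \<in> {..n}"
  then show "\<rho> m * min (b n) (b m) = \<rho> m * b m" using smono_le[OF assms, of m n] by (simp add: min_absorb2)
qed

lemma concQ_mono:
  assumes sm: "\<forall>i. smono (a i) n" and sQ: "s \<in> Qset a n" and s'Q: "s' \<in> Qset a n"
    and le: "\<forall>i k. k \<le> n \<longrightarrow> s i k \<le> s' i k" and eqn: "\<forall>i. s i n = s' i n"
  shows "concQ a n \<phi> s' \<le> concQ a n \<phi> s"
  unfolding concQ_def conc_mat_def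
proof (rule Sup_least)
  fix v assume "v \<in> {ereal (\<Sum>k\<in>K. c k * phibar \<phi> n (y k)) |(K::nat set) c y. finite K \<and> (\<forall>k\<in>K. 0 \<le> c k \<and> y k \<in> Qset a n) \<and> sum c K = 1 \<and> (\<lambda>i j. \<Sum>k\<in>K. c k * y k i j) = s'}"
  then obtain K :: "nat set" and c y where v: "v = ereal (\<Sum>k\<in>K. c k * phibar \<phi> n (y k))" and fK: "finite K"
    and cy: "\<forall>k\<in>K. 0 \<le> c k \<and> y k \<in> Qset a n" and c1: "sum c K = 1" and ys: "(\<lambda>i j. \<Sum>k\<in>K. c k * y k i j) = s'"
    by blast
  define \<nu> where "\<nu> k i = (SOME \<mu>. rowQ (a i) n \<mu> (y k i))" for k i
  have \<nu>: "rowQ (a i) n (\<nu> k i) (y k i)" if "k \<in> K" for k i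
    using cy that Qset_iff[OF sm] unfolding \<nu>_def by (metis (no_types, lifting) someI_ex)
  define \<mu>' where "\<mu>' i m = (\<Sum>k\<in>K. c k * \<nu> k i m)" for i m
  have \<mu>': "rowQ (a i) n (\<mu>' i) (s' i)" for i
  proof -
    have "(\<Sum>m\<le>n. \<mu>' i m) = (\<Sum>k\<in>K. c k * (\<Sum>m\<le>n. \<nu> k i m))"
      unfolding \<mu>'_def sum_distrib_left by (subst sum.swap) simp
    also have "\<dots> = (\<Sum>k\<in>K. c k)" using \<nu> unfolding rowQ_def isdist_def by simp
    finally have s1: "(\<Sum>m\<le>n. \<mu>' i m) = 1" using c1 by simp
    have nn: "0 \<le> \<mu>' i m" if "m \<le> n" for m
      unfolding \<mu>'_def using cy \<nu> that unfolding rowQ_def isdist_def by (auto intro!: sum_nonneg)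
    have "s' i j = Fm (a i) n (\<mu>' i) (a i j)" if "j \<le> n" for j
    proof -
      have "s' i j = (\<Sum>k\<in>K. c k * y k i j)" using ys by (auto dest: fun_cong)
      also have "\<dots> = (\<Sum>k\<in>K. c k * Fm (a i) n (\<nu> k i) (a i j))"
        using \<nu> that unfolding rowQ_def by (intro sum.cong) auto
      also have "\<dots> = Fm (a i) n (\<mu>' i) (a i j)" unfolding \<mu>'_def by (rule Fm_lin[symmetric])
      finally show ?thesis .
    qed
    then show ?thesis using s1 nn unfolding rowQ_def isdist_def by auto
  qed
  define \<mu> where "\<mu> i = (SOME \<mu>. rowQ (a i) n \<mu> (s i))" for i
  have \<mu>: "rowQ (a i) n (\<mu> i) (s i)" for i
    using sQ Qset_iff[OF sm] unfolding \<mu>_def by (metis (no_types, lifting) someI_ex)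
  have "\<exists>\<pi>. goodK (a i) n (\<mu>' i) (\<mu> i) \<pi>" for i
  proof (rule strassen)
    show "smono (a i) n" using sm by simp
    show "isdist n (\<mu> i)" "isdist n (\<mu>' i)" using \<mu> \<mu>' unfolding rowQ_def by auto
    show "\<forall>k\<le>n. Fm (a i) n (\<mu> i) (a i k) \<le> Fm (a i) n (\<mu>' i) (a i k)"
      using \<mu>[of i] \<mu>'[of i] le unfolding rowQ_def by metis
    show "Fm (a i) n (\<mu> i) (a i n) = Fm (a i) n (\<mu>' i) (a i n)"
      using \<mu>[of i] \<mu>'[of i] eqn unfolding rowQ_def by auto
  qed
  then obtain \<pi> where \<pi>: "\<And>i. goodK (a i) n (\<mu>' i) (\<mu> i) (\<pi> i)" by metis
  define y' where "y' k i j = (if j \<le> n then Fm (a i) n (push n (\<nu> k i) (\<pi> i)) (a i j) else 0)" for k i j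
  have y'Q: "y' k \<in> Qset a n" if "k \<in> K" for k
    unfolding Qset_iff[OF sm]
  proof (rule allI, rule conjI)
    fix i
    have "isdist n (push n (\<nu> k i) (\<pi> i))"
      using \<nu>[OF that, of i] \<pi>[of i]
      by (intro push_dist2) (auto simp: isdist_def rowQ_def goodK_def)
    then show "\<exists>\<mu>. rowQ (a i) n \<mu> (y' k i)" unfolding rowQ_def y'_def by auto
    show "\<forall>k'>n. y' k i k' = 0" unfolding y'_def by auto
  qed
  have top: "y' k i n = y k i n" if "k \<in> K" for k i
  proof -
    have "y' k i n = (\<Sum>m\<le>n. push n (\<nu> k i) (\<pi> i) m * a i m)" unfolding y'_def using Fm_top sm by simp
    also have "\<dots> = (\<Sum>r\<le>n. \<nu> k i r * (\<Sum>m\<le>n. \<pi> i r m * a i m))" by (rule push_apply)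
    also have "\<dots> = (\<Sum>r\<le>n. \<nu> k i r * a i r)" using \<pi>[of i] unfolding goodK_def by (intro sum.cong) auto
    also have "\<dots> = Fm (a i) n (\<nu> k i) (a i n)" using Fm_top sm by simp
    also have "\<dots> = y k i n" using \<nu>[OF that] unfolding rowQ_def by simp
    finally show ?thesis .
  qed
  have ph: "phibar \<phi> n (y' k) = phibar \<phi> n (y k)" if "k \<in> K" for k
    unfolding phibar_def using top[OF that] by simp
  have ys': "(\<lambda>i j. \<Sum>k\<in>K. c k * y' k i j) = s"
  proof (intro ext)
    fix i j
    show "(\<Sum>k\<in>K. c k * y' k i j) = s i j"
    proof (cases "j \<le> n")
      case True
      have "(\<Sum>k\<in>K. c k * y' k i j) = (\<Sum>k\<in>K. c k * Fm (a i) n (push n (\<nu> k i) (\<pi> i)) (a i j))"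
        unfolding y'_def using True by simp
      also have "\<dots> = Fm (a i) n (\<lambda>m. \<Sum>k\<in>K. c k * push n (\<nu> k i) (\<pi> i) m) (a i j)"
        by (rule Fm_lin[symmetric])
      also have "\<dots> = Fm (a i) n (\<mu> i) (a i j)"
        using \<pi>[of i] unfolding push_lin goodK_def \<mu>'_def by (intro Fm_cong) auto
      also have "\<dots> = s i j" using \<mu>[of i] True unfolding rowQ_def by simp
      finally show ?thesis .
    next
      case False
      then show ?thesis using sQ Qset_iff[OF sm] unfolding y'_def by auto
    qed
  qed
  have "v = ereal (\<Sum>k\<in>K. c k * phibar \<phi> n (y' k))" using v ph by simp
  then have "v \<in> {ereal (\<Sum>k\<in>K. c k * phibar \<phi> n (y k)) |(K::nat set) c y. finite K \<and> (\<forall>k\<in>K. 0 \<le> c k \<and> y k \<in> Qset a n) \<and> sum c K = 1 \<and> (\<lambda>i j. \<Sum>k\<in>K. c k * y k i j) = s}"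
    using fK cy c1 ys' y'Q by blast
  then show "v \<le> Sup {ereal (\<Sum>k\<in>K. c k * phibar \<phi> n (y k)) |(K::nat set) c y. finite K \<and> (\<forall>k\<in>K. 0 \<le> c k \<and> y k \<in> Qset a n) \<and> sum c K = 1 \<and> (\<lambda>i j. \<Sum>k\<in>K. c k * y k i j) = s}"
    by (rule Sup_upper)
qed



definition Vset :: "(nat \<Rightarrow> real) \<Rightarrow> nat \<Rightarrow> (nat \<Rightarrow> ereal) \<Rightarrow> real \<Rightarrow> ereal set" where
  "Vset b n U x = {(\<Sum>k\<in>K. ereal (c k) * xi b n U (y k)) | (K::nat set) c y. finite K \<and> (\<forall>k\<in>K. 0 \<le> c k \<and> y k \<in> {b 0..b n}) \<and> sum c K = 1 \<and> (\<Sum>k\<in>K. c k * y k) = x}"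

lemma conc_xi_V: "conc_xi b n U x = Sup (Vset b n U x)"
  unfolding conc_xi_def conc_line_def Vset_def by simp

lemma xi_grid: assumes "smono b n" "j \<le> n" shows "xi b n U (b j) = U j"
proof -
  have "(THE j'. j' \<le> n \<and> b j' = b j) = j"
  proof (rule the_equality)
    fix j' assume "j' \<le> n \<and> b j' = b j"
    then show "j' = j" using smono_lt[OF assms(1), of j' j] smono_lt[OF assms(1), of j j'] assms(2)
      by (cases j' j rule: linorder_cases) auto
  qed (use assms in auto)
  then show ?thesis unfolding xi_def using assms by auto
qed

lemma xi_le: assumes "smono b n" "\<forall>m\<le>n. U m \<le> ereal (S (b m))" shows "xi b n U y \<le> ereal (S y)"
proof (cases "\<exists>j\<le>n. b j = y")
  case True
  then obtain j where "j \<le> n" "b j = y" by blast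
  then show ?thesis using xi_grid[OF assms(1)] assms(2) by auto
next
  case False then show ?thesis by (auto simp: xi_def)
qed

lemma conc_UB: assumes sm: "smono b n" and cv: "convex_on {b 0..b n} (\<lambda>x. - S x)"
  and le: "\<forall>m\<le>n. U m \<le> ereal (S (b m))"
  shows "conc_xi b n U x \<le> ereal (S x)"
  unfolding conc_xi_V
proof (rule Sup_least)
  fix v assume "v \<in> Vset b n U x"
  then obtain K :: "nat set" and c y where v: "v = (\<Sum>k\<in>K. ereal (c k) * xi b n U (y k))" and fK: "finite K"
    and cy: "\<forall>k\<in>K. 0 \<le> c k \<and> y k \<in> {b 0..b n}" and c1: "sum c K = 1" and yx: "(\<Sum>k\<in>K. c k * y k) = x"
    unfolding Vset_def by blast
  have "v \<le> (\<Sum>k\<in>K. ereal (c k * S (y k)))"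
    unfolding v
  proof (rule sum_mono)
    fix k assume "k \<in> K"
    then have "ereal (c k) * xi b n U (y k) \<le> ereal (c k) * ereal (S (y k))"
      using cy xi_le[OF sm le] by (intro ereal_mult_left_mono) auto
    then show "ereal (c k) * xi b n U (y k) \<le> ereal (c k * S (y k))" by simp
  qed
  also have "\<dots> = ereal (\<Sum>k\<in>K. c k * S (y k))" by simp
  also have "(\<Sum>k\<in>K. c k * S (y k)) \<le> S x"
  proof -
    have "K \<noteq> {}" using c1 by auto
    then have "- S (\<Sum>k\<in>K. c k *\<^sub>R y k) \<le> (\<Sum>k\<in>K. c k * - S (y k))"
      using convex_on_sum[OF fK _ cv c1] cy by auto
    then show ?thesis using yx by (simp add: sum_negf)
  qed
  then have "ereal (\<Sum>k\<in>K. c k * S (y k)) \<le> ereal (S x)" by simp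
  finally show "v \<le> ereal (S x)" .
qed

lemma conc_LB: assumes sm: "smono b n" and j: "j \<le> n" shows "U j \<le> conc_xi b n U (b j)"
  unfolding conc_xi_V
proof (rule Sup_upper)
  have "b j \<in> {b 0..b n}" using smono_le[OF sm] j by auto
  then have "(\<Sum>k\<in>{0::nat}. ereal ((\<lambda>_. 1) k) * xi b n U ((\<lambda>_. b j) k)) \<in> Vset b n U (b j)"
    unfolding Vset_def by (intro CollectI exI[of _ "{0::nat}"] exI[of _ "\<lambda>_. 1"] exI[of _ "\<lambda>_. b j"]) auto
  then show "U j \<in> Vset b n U (b j)" using xi_grid[OF sm j] by simp
qed

lemma conc_LB2: assumes sm: "smono b n" and n1: "1 \<le> n" and x: "x \<in> {b 0..b n}"
  and u0: "U 0 = ereal u0" and un: "U n = ereal un"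
  shows "conc_xi b n U x \<noteq> -\<infinity>"
proof -
  have b0n: "b 0 < b n" using smono_lt[OF sm, of 0 n] n1 by auto
  define l where "l = (b n - x) / (b n - b 0)"
  have l01: "0 \<le> l" "l \<le> 1" using x b0n unfolding l_def by (auto simp: field_simps)
  have lx: "l * b 0 + (1 - l) * b n = x"
  proof -
    have h: "l * (b n - b 0) = b n - x" using b0n unfolding l_def by simp
    have g: "l * b 0 + (1 - l) * b n = b n - l * (b n - b 0)" by (simp add: algebra_simps)
    show ?thesis using g h by simp
  qed
  define c where "c k = (if k = 0 then l else 1 - l)" for k :: nat
  define y where "y k = (if k = 0 then b 0 else b n)" for k :: nat
  have "(\<Sum>k\<in>{0::nat, 1}. ereal (c k) * xi b n U (y k)) \<in> Vset b n U x"
    unfolding Vset_def using l01 lx b0n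
    by (intro CollectI exI[of _ "{0::nat, 1}"] exI[of _ c] exI[of _ y]) (auto simp: c_def y_def)
  moreover have "(\<Sum>k\<in>{0::nat, 1}. ereal (c k) * xi b n U (y k)) = ereal (l * u0 + (1 - l) * un)"
    using xi_grid[OF sm, of 0 U] xi_grid[OF sm, of n U] u0 un by (simp add: c_def y_def)
  ultimately have "ereal (l * u0 + (1 - l) * un) \<le> conc_xi b n U x"
    unfolding conc_xi_V by (metis Sup_upper)
  then show ?thesis by auto
qed

lemma convex_on_affine: "convex A \<Longrightarrow> convex_on A (\<lambda>x::real. \<alpha> + \<beta> * x)"
  by (rule convex_onI) (auto simp: algebra_simps)

lemma conc_fin: assumes sm: "smono b n" and n1: "1 \<le> n" and x: "x \<in> {b 0..b n}"
  and u0: "U 0 = ereal u0" and un: "U n = ereal un" and ninf: "\<forall>j. U j \<noteq> \<infinity>"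
  shows "conc_xi b n U x = ereal (real_of_ereal (conc_xi b n U x))"
proof -
  define M where "M = (\<Sum>m\<le>n. \<bar>real_of_ereal (U m)\<bar>)"
  have "U m \<le> ereal M" if "m \<le> n" for m
  proof (cases "U m")
    case (real r)
    have "\<bar>real_of_ereal (U m)\<bar> \<le> M" unfolding M_def
      apply (rule member_le_sum)
      using that apply simp
       apply (rule abs_ge_zero)
      apply simp
      done
    then show ?thesis using real by auto
  qed (use ninf in auto)
  then have "conc_xi b n U x \<le> ereal ((\<lambda>_. M) x)"
    using conc_UB[OF sm, of "\<lambda>_. M" U x] convex_on_affine[of "{b 0..b n}" "-M" 0] by auto
  moreover have "conc_xi b n U x \<noteq> -\<infinity>" using conc_LB2[OF sm n1 x u0 un] .
  ultimately show ?thesis by (cases "conc_xi b n U x") auto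
qed

lemma conc_end: assumes sm: "smono b n" and n1: "1 \<le> n"
  and un: "U n = ereal un" and ninf: "\<forall>j. U j \<noteq> \<infinity>"
  shows "conc_xi b n U (b n) = ereal un"
proof -
  define M where "M = (\<Sum>m<n. \<bar>real_of_ereal (U m) - un\<bar> / (b n - b m))"
  have le: "U m \<le> ereal (un + M * (b n - b m))" if "m \<le> n" for m
  proof (cases "m = n")
    case True then show ?thesis using un by simp
  next
    case False
    then have mn: "m < n" using that by simp
    then have d: "0 < b n - b m" using smono_lt[OF sm mn] by simp
    show ?thesis
    proof (cases "U m")
      case (real r)
      have "\<bar>real_of_ereal (U m) - un\<bar> / (b n - b m) \<le> M" unfolding M_def
        apply (rule member_le_sum)
        using mn apply simp
         apply (rule divide_nonneg_nonneg, rule abs_ge_zero)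
        using smono_le[OF sm] apply force
        apply simp
        done
      then have "\<bar>r - un\<bar> \<le> M * (b n - b m)" using real d by (simp add: field_simps)
      then show ?thesis using real by simp
    qed (use ninf in auto)
  qed
  have cv: "convex_on {b 0..b n} (\<lambda>x. - (un + M * (b n - x)))"
    using convex_on_affine[of "{b 0..b n}" "- un - M * b n" M] by (simp add: algebra_simps)
  have "conc_xi b n U (b n) \<le> ereal (un + M * (b n - b n))"
    using conc_UB[OF sm cv, of U "b n"] le by blast
  moreover have "U n \<le> conc_xi b n U (b n)" using conc_LB[OF sm] by simp
  ultimately show ?thesis using un by simp
qed



lemma ereal_mult_ne_inf: "0 \<le> c \<Longrightarrow> z \<noteq> \<infinity> \<Longrightarrow> ereal c * z \<noteq> \<infinity>"
  by (cases z) auto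

lemma ereal_sum_cmult: assumes "\<forall>k\<in>K. f k \<noteq> \<infinity>" shows "ereal c * sum f K = (\<Sum>k\<in>K. ereal c * f k)"
  using assms
proof (induction K rule: infinite_finite_induct)
  case (insert x F)
  have "sum f F \<noteq> \<infinity>" using insert by (simp add: sum_Pinfty)
  moreover have "f x \<noteq> \<infinity>" using insert by simp
  ultimately have "ereal c * (f x + sum f F) = ereal c * f x + ereal c * sum f F"
    by (intro ereal_distrib_left) auto
  then show ?case using insert by simp
qed auto

lemma ereal_mult_assoc3: "ereal (a * b) * z = ereal a * (ereal b * z)"
  by (metis mult.assoc times_ereal.simps(1))

lemma sum_evenodd: "sum g ((\<lambda>k. 2 * k) ` KA \<union> (\<lambda>k. 2 * k + 1) ` KB) = (\<Sum>k\<in>KA. g (2 * k)) + (\<Sum>k\<in>KB. g (2 * k + 1))"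
  if "finite KA" "finite KB" for g :: "nat \<Rightarrow> 'a::comm_monoid_add"
proof -
  have d: "(\<lambda>k. 2 * k) ` KA \<inter> (\<lambda>k. 2 * k + 1) ` KB = {}" by auto presburger
  have "sum g ((\<lambda>k. 2 * k) ` KA \<union> (\<lambda>k. 2 * k + 1) ` KB) = sum g ((\<lambda>k. 2 * k) ` KA) + sum g ((\<lambda>k. 2 * k + 1) ` KB)"
    using that d by (intro sum.union_disjoint) auto
  also have "sum g ((\<lambda>k. 2 * k) ` KA) = (\<Sum>k\<in>KA. g (2 * k))" by (subst sum.reindex) (auto simp: inj_on_def)
  also have "sum g ((\<lambda>k. 2 * k + 1) ` KB) = (\<Sum>k\<in>KB. g (2 * k + 1))" by (subst sum.reindex) (auto simp: inj_on_def)
  finally show ?thesis .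
qed

lemma Vset_comb:
  assumes ninf: "\<forall>j. U j \<noteq> \<infinity>" and l: "0 < l" "l < 1"
    and v1: "ereal r1 \<in> Vset b n U x1" and v2: "ereal r2 \<in> Vset b n U x2"
  shows "ereal (l * r1 + (1 - l) * r2) \<in> Vset b n U (l * x1 + (1 - l) * x2)"
proof -
  obtain KA :: "nat set" and c1 y1 where h1: "ereal r1 = (\<Sum>k\<in>KA. ereal (c1 k) * xi b n U (y1 k))" "finite KA"
    "\<forall>k\<in>KA. 0 \<le> c1 k \<and> y1 k \<in> {b 0..b n}" "sum c1 KA = 1" "(\<Sum>k\<in>KA. c1 k * y1 k) = x1"
    using v1 unfolding Vset_def by blast
  obtain KB :: "nat set" and c2 y2 where h2: "ereal r2 = (\<Sum>k\<in>KB. ereal (c2 k) * xi b n U (y2 k))" "finite KB"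
    "\<forall>k\<in>KB. 0 \<le> c2 k \<and> y2 k \<in> {b 0..b n}" "sum c2 KB = 1" "(\<Sum>k\<in>KB. c2 k * y2 k) = x2"
    using v2 unfolding Vset_def by blast
  define K where "K = (\<lambda>k. 2 * k) ` KA \<union> (\<lambda>k. 2 * k + 1) ` KB"
  define c where "c m = (if even m then l * c1 (m div 2) else (1 - l) * c2 (m div 2))" for m :: nat
  define y where "y m = (if even m then y1 (m div 2) else y2 (m div 2))" for m :: nat
  have se: "sum g K = (\<Sum>k\<in>KA. g (2 * k)) + (\<Sum>k\<in>KB. g (2 * k + 1))" for g :: "nat \<Rightarrow> 'a::comm_monoid_add"
    unfolding K_def using sum_evenodd h1(2) h2(2) by blast
  have fK: "finite K" unfolding K_def using h1(2) h2(2) by auto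
  have cy: "\<forall>k\<in>K. 0 \<le> c k \<and> y k \<in> {b 0..b n}" unfolding K_def c_def y_def using h1(3) h2(3) l by auto
  have c1': "sum c K = 1"
    unfolding se c_def using h1(4) h2(4) by (simp flip: sum_distrib_left)
  have yx: "(\<Sum>k\<in>K. c k * y k) = l * x1 + (1 - l) * x2"
    unfolding se c_def y_def using h1(5) h2(5) by (simp add: mult.assoc flip: sum_distrib_left)
  have nz1: "\<forall>k\<in>KA. ereal (c1 k) * xi b n U (y1 k) \<noteq> \<infinity>"
    using h1(3) ninf by (auto intro!: ereal_mult_ne_inf simp: xi_def)
  have nz2: "\<forall>k\<in>KB. ereal (c2 k) * xi b n U (y2 k) \<noteq> \<infinity>"
    using h2(3) ninf by (auto intro!: ereal_mult_ne_inf simp: xi_def)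
  have "(\<Sum>k\<in>K. ereal (c k) * xi b n U (y k))
      = (\<Sum>k\<in>KA. ereal l * (ereal (c1 k) * xi b n U (y1 k))) + (\<Sum>k\<in>KB. ereal (1 - l) * (ereal (c2 k) * xi b n U (y2 k)))"
    unfolding se c_def y_def by (simp add: ereal_mult_assoc3)
  also have "\<dots> = ereal l * ereal r1 + ereal (1 - l) * ereal r2"
    using ereal_sum_cmult[OF nz1, of l] ereal_sum_cmult[OF nz2, of "1 - l"] h1(1) h2(1) by simp
  also have "\<dots> = ereal (l * r1 + (1 - l) * r2)" by simp
  finally have "ereal (l * r1 + (1 - l) * r2) = (\<Sum>k\<in>K. ereal (c k) * xi b n U (y k))" by simp
  then show ?thesis unfolding Vset_def using fK cy c1' yx by blast
qed

lemma conc_concave: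
  assumes sm: "smono b n" and ninf: "\<forall>j. U j \<noteq> \<infinity>" and j: "0 < j" "j < n"
    and e1: "conc_xi b n U (b (j - 1)) = ereal e1" and e2: "conc_xi b n U (b (Suc j)) = ereal e2"
    and e: "conc_xi b n U (b j) = ereal e"
  shows "lam b (j - 1) (Suc j) j * e1 + (1 - lam b (j - 1) (Suc j) j) * e2 \<le> e"
proof (rule ccontr)
  define l where "l = lam b (j - 1) (Suc j) j"
  have bs: "b (j - 1) < b j" "b j < b (Suc j)" using smono_lt[OF sm] j by auto
  have l01: "0 < l" "l < 1" unfolding l_def lam_def using bs by (auto simp: field_simps)
  have bj: "l * b (j - 1) + (1 - l) * b (Suc j) = b j" unfolding l_def using lam_comb[of b "j - 1" "Suc j" j] bs by simp
  assume "\<not> lam b (j - 1) (Suc j) j * e1 + (1 - lam b (j - 1) (Suc j) j) * e2 \<le> e"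
  then have lt: "e < l * e1 + (1 - l) * e2" unfolding l_def by simp
  define \<delta> where "\<delta> = (l * e1 + (1 - l) * e2 - e) / 2"
  have \<delta>: "0 < \<delta>" using lt unfolding \<delta>_def by simp
  have "ereal (e1 - \<delta>) < Sup (Vset b n U (b (j - 1)))" using e1 \<delta> unfolding conc_xi_V by simp
  then obtain v1 where v1: "v1 \<in> Vset b n U (b (j - 1))" "ereal (e1 - \<delta>) < v1" by (auto simp: less_Sup_iff)
  have "v1 \<le> ereal e1" using v1(1) e1 unfolding conc_xi_V by (metis Sup_upper)
  then obtain r1 where r1: "v1 = ereal r1" "e1 - \<delta> < r1" using v1(2) by (cases v1) auto
  have "ereal (e2 - \<delta>) < Sup (Vset b n U (b (Suc j)))" using e2 \<delta> unfolding conc_xi_V by simp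
  then obtain v2 where v2: "v2 \<in> Vset b n U (b (Suc j))" "ereal (e2 - \<delta>) < v2" by (auto simp: less_Sup_iff)
  have "v2 \<le> ereal e2" using v2(1) e2 unfolding conc_xi_V by (metis Sup_upper)
  then obtain r2 where r2: "v2 = ereal r2" "e2 - \<delta> < r2" using v2(2) by (cases v2) auto
  have "ereal (l * r1 + (1 - l) * r2) \<in> Vset b n U (b j)"
    using Vset_comb[OF ninf l01, of r1 b n "b (j - 1)" r2 "b (Suc j)"] v1(1) v2(1) r1 r2 bj by simp
  then have "ereal (l * r1 + (1 - l) * r2) \<le> ereal e" using e unfolding conc_xi_V by (metis Sup_upper)
  then have le: "l * r1 + (1 - l) * r2 \<le> e" by simp
  have "l * (e1 - \<delta>) \<le> l * r1" "(1 - l) * (e2 - \<delta>) \<le> (1 - l) * r2"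
    using r1 r2 l01 by (auto intro: mult_left_mono)
  then have A: "l * e1 + (1 - l) * e2 - \<delta> \<le> l * r1 + (1 - l) * r2" by (simp add: algebra_simps)
  have gen: "\<And>X::real. e < X \<Longrightarrow> e < X - (X - e) / 2" by (simp add: field_simps)
  have "e < l * e1 + (1 - l) * e2 - \<delta>" unfolding \<delta>_def using gen[OF lt] .
  then show False using le A by linarith
qed

lemma slope_from_conc:
  fixes b0 b1 b2 e0 e1 e2 lam' :: real
  assumes "b0 < b1" "b1 < b2" "lam' = (b2 - b1) / (b2 - b0)" "lam' * e0 + (1 - lam') * e2 \<le> e1"
  shows "(e2 - e1) / (b2 - b1) \<le> (e1 - e0) / (b1 - b0)"
proof -
  have "b2 - b0 \<noteq> 0" using assms by simp
  then have h: "(b2 - b0) * lam' = b2 - b1" by (simp add: assms(3))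
  have "(b2 - b0) * (lam' * e0 + (1 - lam') * e2) = ((b2 - b0) * lam') * e0 + (b2 - b0) * e2 - ((b2 - b0) * lam') * e2"
    by (simp add: algebra_simps)
  also have "\<dots> = (b2 - b1) * e0 + (b1 - b0) * e2" unfolding h by (simp add: algebra_simps)
  finally have "(b2 - b0) * (lam' * e0 + (1 - lam') * e2) = (b2 - b1) * e0 + (b1 - b0) * e2" .
  moreover have "(b2 - b0) * (lam' * e0 + (1 - lam') * e2) \<le> (b2 - b0) * e1"
    using assms by (intro mult_left_mono) auto
  ultimately have "(b1 - b0) * (e2 - e1) \<le> (b2 - b1) * (e1 - e0)" by (simp add: algebra_simps)
  then show ?thesis using assms(1,2) by (simp add: field_simps)
qed



lemma env_fin: assumes sm: "smono b n" and n1: "1 \<le> n" and ninf: "\<forall>j. U j \<noteq> \<infinity>"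
  and u0: "U 0 = ereal (b 0)" and un: "U n = ereal fb" and j: "j \<le> n"
  shows "conc_xi b n U (b j) = ereal (real_of_ereal (conc_xi b n U (b j)))"
  using conc_fin[OF sm n1 _ u0 un ninf] smono_le[OF sm] j by auto

lemma env_ge: assumes sm: "smono b n" and n1: "1 \<le> n" and ninf: "\<forall>j. U j \<noteq> \<infinity>"
  and u0: "U 0 = ereal (b 0)" and un: "U n = ereal fb" and j: "j \<le> n"
  shows "U j \<le> ereal (real_of_ereal (conc_xi b n U (b j)))"
  using conc_LB[OF sm j, of U] env_fin[OF assms] by simp

lemma env_end: assumes sm: "smono b n" and n1: "1 \<le> n" and ninf: "\<forall>j. U j \<noteq> \<infinity>"
  and un: "U n = ereal fb"
  shows "real_of_ereal (conc_xi b n U (b n)) = fb"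
  using conc_end[OF sm n1 un ninf] by simp

lemma env_le: assumes sm: "smono b n" and n1: "1 \<le> n" and ninf: "\<forall>j. U j \<noteq> \<infinity>"
  and u0: "U 0 = ereal (b 0)" and un: "U n = ereal fb" and j: "j \<le> n"
  and t: "rowQ b n \<mu> t" and Ut: "\<forall>j\<le>n. U j \<le> ereal (t j)"
  shows "real_of_ereal (conc_xi b n U (b j)) \<le> t j"
proof -
  have d: "isdist n \<mu>" using t unfolding rowQ_def by simp
  have "\<forall>m\<le>n. U m \<le> ereal (Fm b n \<mu> (b m))" using Ut t unfolding rowQ_def by auto
  then have "conc_xi b n U (b j) \<le> ereal (Fm b n \<mu> (b j))"
    using conc_UB[OF sm Fm_concave_on[OF d]] by auto
  then show ?thesis using env_fin[OF sm n1 ninf u0 un j] t j unfolding rowQ_def by (metis ereal_less_eq(3))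
qed

lemma env_rowQ: assumes sm: "smono b n" and n1: "1 \<le> n" and ninf: "\<forall>j. U j \<noteq> \<infinity>"
  and u0: "U 0 = ereal (b 0)" and un: "U n = ereal fb"
  and t: "rowQ b n \<mu> t" and Ut: "\<forall>j\<le>n. U j \<le> ereal (t j)" and tn: "t n = fb"
  shows "\<exists>\<nu>. rowQ b n \<nu> (\<lambda>j. real_of_ereal (conc_xi b n U (b j)))"
proof -
  define e where "e j = real_of_ereal (conc_xi b n U (b j))" for j
  have d: "isdist n \<mu>" using t unfolding rowQ_def by simp
  have fin: "conc_xi b n U (b j) = ereal (e j)" if "j \<le> n" for j using env_fin[OF sm n1 ninf u0 un that] e_def by simp
  have ge: "U j \<le> ereal (e j)" if "j \<le> n" for j using env_ge[OF sm n1 ninf u0 un that] e_def by simp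
  have le: "e j \<le> t j" if "j \<le> n" for j using env_le[OF sm n1 ninf u0 un that t Ut] e_def by simp
  have en: "e n = fb" using env_end[OF sm n1 ninf un] e_def by simp
  have t0: "t 0 = b 0" using t Fm_b0[OF d sm] unfolding rowQ_def by simp
  have e0: "e 0 = b 0" using ge[of 0] le[of 0] u0 t0 by simp
  have b01: "b 0 < b 1" using smono_lt[OF sm, of 0 1] n1 by simp
  have "t 1 \<le> b 1" using t Fm_le_x[OF d] n1 unfolding rowQ_def by simp
  then have z1: "(e 1 - e 0) / (b 1 - b 0) \<le> 1" using le[of 1] n1 e0 b01 by (simp add: field_simps)
  have "t (n - 1) \<le> t n" using t Fm_mono[OF d, of "b (n - 1)" "b n"] smono_le[OF sm, of "n - 1" n] unfolding rowQ_def by simp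
  then have "e (n - 1) \<le> e n" using le[of "n - 1"] en tn by simp
  moreover have "b (n - 1) < b n" using smono_lt[OF sm, of "n - 1" n] n1 by simp
  ultimately have zn: "0 \<le> (e n - e (n - 1)) / (b n - b (n - 1))" by simp
  have zm: "(e (Suc j) - e j) / (b (Suc j) - b j) \<le> (e j - e (j - 1)) / (b j - b (j - 1))"
    if "1 \<le> j" "j < n" for j
  proof -
    have "lam b (j - 1) (Suc j) j * e (j - 1) + (1 - lam b (j - 1) (Suc j) j) * e (Suc j) \<le> e j"
      using conc_concave[OF sm ninf _ that(2) fin[of "j - 1"] fin[of "Suc j"] fin[of j]] that by simp
    moreover have "b (j - 1) < b j" "b j < b (Suc j)" using smono_lt[OF sm] that by auto
    ultimately show ?thesis using slope_from_conc[of "b (j - 1)" "b j" "b (Suc j)"] unfolding lam_def by blast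
  qed
  show ?thesis using rowQ_char[OF sm n1 e0 z1 _ zn] zm unfolding e_def by blast
qed

lemma tau_lt: fixes \<tau> :: "nat \<Rightarrow> nat" assumes "\<forall>t<l. \<tau> t < \<tau> (Suc t)" "t < t'" "t' \<le> l" shows "\<tau> t < \<tau> t'"
  using assms(2,3)
proof (induction t')
  case (Suc k)
  have "\<tau> k < \<tau> (Suc k)" using assms(1) Suc.prems by auto
  then show ?case using Suc by (cases "t = k") auto
qed simp

lemma tau_le: fixes \<tau> :: "nat \<Rightarrow> nat" assumes "\<forall>t<l. \<tau> t < \<tau> (Suc t)" "t \<le> t'" "t' \<le> l" shows "\<tau> t \<le> \<tau> t'"
  using tau_lt[OF assms(1)] assms(2,3) by (cases "t = t'") (auto intro: less_imp_le)

definition Zr :: "(nat \<Rightarrow> real) \<Rightarrow> (nat \<Rightarrow> real) \<Rightarrow> nat \<Rightarrow> real" where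
  "Zr b t j = (if j = 0 then 1 else (t j - t (j - 1)) / (b j - b (j - 1)))"

definition IncR :: "(nat \<Rightarrow> nat) \<Rightarrow> nat \<Rightarrow> nat \<Rightarrow> (nat \<Rightarrow> real) \<Rightarrow> (nat \<Rightarrow> real) \<Rightarrow> bool" where
  "IncR \<tau> l n z \<delta> \<longleftrightarrow> z 0 = 1 \<and> (\<forall>j<n. z (Suc j) \<le> z j) \<and> 0 \<le> z n \<and>
      (\<forall>t\<in>{1..<l}. \<delta> t \<in> {0, 1} \<and> z (\<tau> t + 1) \<le> \<delta> t \<and> \<delta> t \<le> z (\<tau> t))"

lemma Inc1_iff: "Inc1 \<tau> l n (Zmap a s) \<delta> \<longleftrightarrow> (\<forall>i. IncR (\<tau> i) (l i) n (Zr (a i) (s i)) (\<delta> i))"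
  unfolding Inc1_def IncR_def Zr_def Zmap_def by simp

lemma Zr_tail: "smono b n \<Longrightarrow> rowQ b n \<mu> t \<Longrightarrow> 1 \<le> j \<Longrightarrow> j \<le> n \<Longrightarrow> Zr b t j = tail n \<mu> j"
  unfolding Zr_def using Zrow by auto

lemma IncB:
  assumes sm: "smono b n" and n1: "1 \<le> n" and t: "rowQ b n \<mu> t" and tn: "t n = fb"
    and tau0: "\<tau> 0 = 0" and taul: "\<tau> l = n" and taum: "\<forall>t<l. \<tau> t < \<tau> (Suc t)"
    and tb: "1 \<le> tb" "tb \<le> l" and fbH: "b (\<tau> (tb - 1)) \<le> fb" "fb \<le> b (\<tau> tb)"
    and inc: "IncR \<tau> l n (Zr b t) \<delta>"
  shows "\<forall>j\<le>\<tau> (tb - 1). b j \<le> t j" "\<forall>j. \<tau> tb \<le> j \<longrightarrow> j \<le> n \<longrightarrow> fb \<le> t j"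
proof -
  have d: "isdist n \<mu>" using t unfolding rowQ_def by simp
  have tF: "t j = Fm b n \<mu> (b j)" if "j \<le> n" for j using t that unfolding rowQ_def by simp
  have tau_pos: "1 \<le> \<tau> s" if "1 \<le> s" "s \<le> l" for s using tau_lt[OF taum, of 0 s] that tau0 by simp
  have tau_n: "\<tau> s < n" if "s < l" for s using tau_lt[OF taum, of s l] that taul by simp
  have inc': "\<delta> s \<in> {0, 1} \<and> Zr b t (\<tau> s + 1) \<le> \<delta> s \<and> \<delta> s \<le> Zr b t (\<tau> s)" if "1 \<le> s" "s < l" for s
    using inc that unfolding IncR_def by auto
  have one: "\<forall>m<\<tau> s. \<mu> m = 0" if "1 \<le> s" "s < l" "\<delta> s = 1" for s
  proof (intro allI impI)
    fix m assume "m < \<tau> s"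
    have "1 \<le> tail n \<mu> (\<tau> s)" using inc'[OF that(1,2)] that(3) Zr_tail[OF sm t tau_pos[of s]] tau_n[of s] that by simp
    then show "\<mu> m = 0" using tail_ge1[OF d] \<open>m < \<tau> s\<close> tau_n[OF that(2)] by simp
  qed
  have zero: "\<forall>m. \<tau> s < m \<longrightarrow> m \<le> n \<longrightarrow> \<mu> m = 0" if "1 \<le> s" "s < l" "\<delta> s = 0" for s
  proof (intro allI impI)
    fix m assume "\<tau> s < m" "m \<le> n"
    have "tail n \<mu> (\<tau> s + 1) \<le> 0" using inc'[OF that(1,2)] that(3) Zr_tail[OF sm t, of "\<tau> s + 1"] tau_n[OF that(2)] by simp
    then show "\<mu> m = 0" using tail_le0[OF d] \<open>\<tau> s < m\<close> \<open>m \<le> n\<close> by simp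
  qed
  have tbn: "\<tau> tb \<le> n" using tau_le[OF taum tb(2) order_refl] taul by simp
  show "\<forall>j\<le>\<tau> (tb - 1). b j \<le> t j"
  proof (intro allI impI)
    fix j assume j: "j \<le> \<tau> (tb - 1)"
    have tl: "tb - 1 < l" using tb by simp
    have jn: "j \<le> n" using j tau_n[OF tl] by simp
    show "b j \<le> t j"
    proof (cases "tb - 1 = 0")
      case True
      then have "j = 0" using j tau0 by simp
      then show ?thesis using tF[of 0] Fm_b0[OF d sm] by simp
    next
      case False
      then have s1: "1 \<le> tb - 1" by simp
      have "\<delta> (tb - 1) \<in> {0, 1}" using inc'[OF s1 tl] by simp
      then consider "\<delta> (tb - 1) = 1" | "\<delta> (tb - 1) = 0" by auto
      then show ?thesis
      proof cases
        case 1
        have "b j \<le> b (\<tau> (tb - 1))" using smono_le[OF sm j] tau_n[OF tl] by simp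
        then show ?thesis using Fm_low[OF sm one[OF s1 tl 1] d] tF[OF jn] tau_n[OF tl] by simp
      next
        case 2
        have p: "\<tau> (tb - 1) \<le> n" using tau_n[OF tl] by simp
        have "t (\<tau> (tb - 1)) = t n"
          using Fm_high[OF sm zero[OF s1 tl 2], of "b n"] smono_le[OF sm, of "\<tau> (tb - 1)" n] p tF[OF p] tF[of n] by simp
        then have "b (\<tau> (tb - 1)) \<le> t (\<tau> (tb - 1))" using tn fbH by simp
        moreover have "t (\<tau> (tb - 1)) - t j \<le> b (\<tau> (tb - 1)) - b j"
          using Fm_lip[OF d, of "b j" "b (\<tau> (tb - 1))"] smono_le[OF sm j p] tF[OF p] tF[OF jn] by simp
        ultimately show ?thesis by simp
      qed
    qed
  qed
  show "\<forall>j. \<tau> tb \<le> j \<longrightarrow> j \<le> n \<longrightarrow> fb \<le> t j"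
  proof (intro allI impI)
    fix j assume j: "\<tau> tb \<le> j" "j \<le> n"
    show "fb \<le> t j"
    proof (cases "tb = l")
      case True
      then have "j = n" using j taul by simp
      then show ?thesis using tn by simp
    next
      case False
      then have tl: "tb < l" using tb by simp
      have "\<delta> tb \<in> {0, 1}" using inc'[OF tb(1) tl] by simp
      then consider "\<delta> tb = 1" | "\<delta> tb = 0" by auto
      then show ?thesis
      proof cases
        case 1
        have "t (\<tau> tb) = b (\<tau> tb)" using Fm_low[OF sm one[OF tb(1) tl 1] d order_refl] tbn tF[OF tbn] by simp
        moreover have "t (\<tau> tb) \<le> t j" using Fm_mono[OF d] smono_le[OF sm j] tF[OF tbn] tF[OF j(2)] by simp
        ultimately show ?thesis using fbH by simp
      next
        case 2
        have "t j = t n"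
          using Fm_high[OF sm zero[OF tb(1) tl 2], of "b j"] Fm_high[OF sm zero[OF tb(1) tl 2], of "b n"]
            smono_le[OF sm j] smono_le[OF sm, of "\<tau> tb" n] tbn tF[OF j(2)] tF[of n] by simp
        then show ?thesis using tn by simp
      qed
    qed
  qed
qed

lemma IncA:
  assumes sm: "smono b n" and n1: "1 \<le> n" and t: "rowQ b n \<mu> t" and tn: "t n = fb"
    and tau0: "\<tau> 0 = 0" and taul: "\<tau> l = n" and taum: "\<forall>t<l. \<tau> t < \<tau> (Suc t)"
    and tb: "1 \<le> tb" "tb \<le> l"
    and lo: "\<forall>j\<le>\<tau> (tb - 1). b j \<le> t j" and hi: "\<forall>j. \<tau> tb \<le> j \<longrightarrow> j \<le> n \<longrightarrow> fb \<le> t j"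
  shows "IncR \<tau> l n (Zr b t) (\<lambda>s. if s < tb then 1 else 0)"
proof -
  have d: "isdist n \<mu>" using t unfolding rowQ_def by simp
  have tF: "t j = Fm b n \<mu> (b j)" if "j \<le> n" for j using t that unfolding rowQ_def by simp
  have tau_pos: "1 \<le> \<tau> s" if "1 \<le> s" "s \<le> l" for s using tau_lt[OF taum, of 0 s] that tau0 by simp
  have tau_n: "\<tau> s < n" if "s < l" for s using tau_lt[OF taum, of s l] that taul by simp
  have Zt: "Zr b t j = tail n \<mu> j" if "1 \<le> j" "j \<le> n" for j using Zr_tail[OF sm t that] .
  have eqlo: "t j = b j" if "j \<le> \<tau> (tb - 1)" for j
  proof -
    have "tb - 1 < l" using tb by simp
    then have "\<tau> (tb - 1) < n" using tau_n by blast
    then have "j \<le> n" using that by simp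
    then show ?thesis using lo that Fm_le_x[OF d, of b "b j"] tF by force
  qed
  have eqhi: "t j = fb" if "\<tau> tb \<le> j" "j \<le> n" for j
  proof -
    have "fb \<le> t j" using hi that by blast
    moreover have "t j \<le> t n" using Fm_mono[OF d, of "b j" "b n" b] smono_le[OF sm, of j n] tF[of j] tF[of n] that by simp
    ultimately show ?thesis using tn by simp
  qed
  show ?thesis unfolding IncR_def
  proof (intro conjI allI impI ballI)
    show "Zr b t 0 = 1" by (simp add: Zr_def)
  next
    fix j assume "j < n"
    show "Zr b t (Suc j) \<le> Zr b t j"
    proof (cases "j = 0")
      case True then show ?thesis using Zt[of 1] n1 tail_le1[OF d] by (simp add: Zr_def)
    next
      case False then show ?thesis using Zt[of j] Zt[of "Suc j"] \<open>j < n\<close> tail_anti[OF d, of j "Suc j"] by simp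
    qed
  next
    show "0 \<le> Zr b t n" using Zt[of n] n1 tail_nonneg[OF d] by simp
  next
    fix s assume s: "s \<in> {1..<l}"
    then have s1: "1 \<le> s" "s < l" by auto
    have tp: "1 \<le> \<tau> s" "\<tau> s < n" using tau_pos[of s] tau_n[of s] s1 by auto
    show "(if s < tb then 1 else 0) \<in> {0, 1::real}" by simp
    show "Zr b t (\<tau> s + 1) \<le> (if s < tb then 1 else 0)"
    proof (cases "s < tb")
      case True then show ?thesis using Zt[of "\<tau> s + 1"] tp tail_le1[OF d] by simp
    next
      case False
      then have "\<tau> tb \<le> \<tau> s" using tau_le[OF taum, of tb s] s1 by simp
      then have "t (\<tau> s + 1) = fb" "t (\<tau> s) = fb" using eqhi tp by auto
      then show ?thesis using False by (simp add: Zr_def)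
    qed
    show "(if s < tb then 1 else 0) \<le> Zr b t (\<tau> s)"
    proof (cases "s < tb")
      case True
      then have le: "\<tau> s \<le> \<tau> (tb - 1)" using tau_le[OF taum, of s "tb - 1"] tb by simp
      then have "t (\<tau> s) = b (\<tau> s)" "t (\<tau> s - 1) = b (\<tau> s - 1)" using eqlo by auto
      moreover have "b (\<tau> s - 1) < b (\<tau> s)" using smono_lt[OF sm, of "\<tau> s - 1" "\<tau> s"] tp by simp
      ultimately show ?thesis using True tp by (simp add: Zr_def)
    next
      case False then show ?thesis using Zt[of "\<tau> s"] tp tail_nonneg[OF d] by simp
    qed
  qed
qed



lemma Qset_comb:
  assumes sm: "\<forall>i. smono (a i) n" and fK: "finite K" and cy: "\<forall>k\<in>K. 0 \<le> c k \<and> y k \<in> Qset a n"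
    and c1: "sum c K = 1"
  shows "(\<lambda>i j. \<Sum>k\<in>K. c k * y k i j) \<in> Qset a n"
  unfolding Qset_iff[OF sm]
proof (rule allI, rule conjI)
  fix i
  define \<nu> where "\<nu> k = (SOME \<mu>. rowQ (a i) n \<mu> (y k i))" for k
  have \<nu>: "rowQ (a i) n (\<nu> k) (y k i)" if "k \<in> K" for k
    using cy that Qset_iff[OF sm] unfolding \<nu>_def by (metis (no_types, lifting) someI_ex)
  define \<mu> where "\<mu> m = (\<Sum>k\<in>K. c k * \<nu> k m)" for m
  have "(\<Sum>m\<le>n. \<mu> m) = (\<Sum>k\<in>K. c k * (\<Sum>m\<le>n. \<nu> k m))"
    unfolding \<mu>_def sum_distrib_left by (subst sum.swap) simp
  also have "\<dots> = (\<Sum>k\<in>K. c k)" using \<nu> unfolding rowQ_def isdist_def by simp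
  finally have s1: "(\<Sum>m\<le>n. \<mu> m) = 1" using c1 by simp
  have nn: "0 \<le> \<mu> m" if "m \<le> n" for m
    unfolding \<mu>_def using cy \<nu> that unfolding rowQ_def isdist_def by (auto intro!: sum_nonneg)
  have "(\<Sum>k\<in>K. c k * y k i j) = Fm (a i) n \<mu> (a i j)" if "j \<le> n" for j
  proof -
    have "(\<Sum>k\<in>K. c k * y k i j) = (\<Sum>k\<in>K. c k * Fm (a i) n (\<nu> k) (a i j))"
      using \<nu> that unfolding rowQ_def by (intro sum.cong) auto
    also have "\<dots> = Fm (a i) n \<mu> (a i j)" unfolding \<mu>_def by (rule Fm_lin[symmetric])
    finally show ?thesis .
  qed
  then show "\<exists>\<mu>. rowQ (a i) n \<mu> ((\<lambda>i j. \<Sum>k\<in>K. c k * y k i j) i)"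
    using s1 nn unfolding rowQ_def isdist_def by auto
  have "y k i j = 0" if "k \<in> K" "n < j" for k j using cy that Qset_iff[OF sm] by blast
  then show "\<forall>j>n. (\<lambda>i j. \<Sum>k\<in>K. c k * y k i j) i j = 0" by simp
qed

lemma concQ_out:
  assumes sm: "\<forall>i. smono (a i) n" and s: "s \<notin> Qset a n"
  shows "concQ a n \<phi> s = -\<infinity>"
proof -
  have e: "{ereal (\<Sum>k\<in>K. c k * phibar \<phi> n (y k)) |(K::nat set) c y. finite K \<and> (\<forall>k\<in>K. 0 \<le> c k \<and> y k \<in> Qset a n) \<and> sum c K = 1 \<and> (\<lambda>i j. \<Sum>k\<in>K. c k * y k i j) = s} = {}"
    using Qset_comb[OF sm] s by blast
  show ?thesis unfolding concQ_def conc_mat_def by (simp only: e Sup_empty) (simp add: bot_ereal_def)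
qed

lemma sup_generic:
  assumes sm: "\<forall>i. smono (a i) n"
    and B: "\<And>s. P s \<Longrightarrow> s \<in> Qset a n \<Longrightarrow> E \<in> Qset a n \<and> (\<forall>i k. k \<le> n \<longrightarrow> E i k \<le> s i k) \<and> (\<forall>i. E i n = s i n)"
    and A: "E \<in> Qset a n \<Longrightarrow> P E"
  shows "Sup {concQ a n \<phi> s | s. P s} = concQ a n \<phi> E"
proof (rule antisym)
  show "Sup {concQ a n \<phi> s | s. P s} \<le> concQ a n \<phi> E"
  proof (rule Sup_least)
    fix v assume "v \<in> {concQ a n \<phi> s | s. P s}"
    then obtain s where v: "v = concQ a n \<phi> s" "P s" by blast
    show "v \<le> concQ a n \<phi> E"
    proof (cases "s \<in> Qset a n")
      case True
      then show ?thesis using B[OF v(2) True] concQ_mono[OF sm, of E s] v(1) by blast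
    next
      case False then show ?thesis using concQ_out[OF sm False] v(1) by simp
    qed
  qed
  show "concQ a n \<phi> E \<le> Sup {concQ a n \<phi> s | s. P s}"
  proof (cases "E \<in> Qset a n")
    case True
    then have "concQ a n \<phi> E \<in> {concQ a n \<phi> s | s. P s}" using A by blast
    then show ?thesis by (rule Sup_upper)
  next
    case False then show ?thesis using concQ_out[OF sm False] by simp
  qed
qed

lemma envB:
  assumes sm: "\<forall>i. smono (a i) n" and n1: "1 \<le> n" and ninf: "\<forall>i j. U i j \<noteq> \<infinity>"
    and u0: "\<forall>i. U i 0 = ereal (a i 0)" and un: "\<forall>i. U i n = ereal (fb $ i)"
    and sQ: "s \<in> Qset a n" and sn: "\<forall>i. s i n = fb $ i" and Us: "\<forall>i j. j \<le> n \<longrightarrow> U i j \<le> ereal (s i j)"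
  shows "env_mat a n U \<in> Qset a n \<and> (\<forall>i k. k \<le> n \<longrightarrow> env_mat a n U i k \<le> s i k) \<and> (\<forall>i. env_mat a n U i n = s i n)"
proof -
  have row: "(\<exists>\<nu>. rowQ (a i) n \<nu> (env_mat a n U i)) \<and> (\<forall>k. k \<le> n \<longrightarrow> env_mat a n U i k \<le> s i k)
     \<and> env_mat a n U i n = s i n" for i
  proof -
    obtain \<mu> where \<mu>: "rowQ (a i) n \<mu> (s i)" using sQ Qset_iff[OF sm] by blast
    have sm': "smono (a i) n" using sm by simp
    have ni: "\<forall>j. U i j \<noteq> \<infinity>" using ninf by simp
    have Ui: "\<forall>j\<le>n. U i j \<le> ereal (s i j)" using Us by simp
    obtain \<nu> where \<nu>: "rowQ (a i) n \<nu> (\<lambda>j. real_of_ereal (conc_xi (a i) n (U i) (a i j)))"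
      using env_rowQ[OF sm' n1 ni u0[rule_format] un[rule_format] \<mu> Ui sn[rule_format]] by blast
    have "rowQ (a i) n \<nu> (env_mat a n U i)" using \<nu> unfolding rowQ_def env_mat_def by simp
    moreover have "env_mat a n U i k \<le> s i k" if "k \<le> n" for k
      using env_le[OF sm' n1 ni u0[rule_format] un[rule_format] that \<mu> Ui] that unfolding env_mat_def by simp
    moreover have "env_mat a n U i n = s i n"
      using env_end[OF sm' n1 ni un[rule_format]] sn unfolding env_mat_def by simp
    ultimately show ?thesis by blast
  qed
  have "env_mat a n U \<in> Qset a n" unfolding Qset_iff[OF sm] using row by (auto simp: env_mat_def)
  then show ?thesis using row by blast
qed

lemma envA:
  assumes sm: "\<forall>i. smono (a i) n" and n1: "1 \<le> n" and ninf: "\<forall>i j. U i j \<noteq> \<infinity>"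
    and u0: "\<forall>i. U i 0 = ereal (a i 0)" and un: "\<forall>i. U i n = ereal (fb $ i)"
  shows "is_mat n (env_mat a n U) \<and> (\<forall>i. env_mat a n U i n = fb $ i) \<and> (\<forall>i j. j \<le> n \<longrightarrow> U i j \<le> ereal (env_mat a n U i j))"
proof (intro conjI allI impI)
  show "is_mat n (env_mat a n U)" unfolding is_mat_def env_mat_def by simp
  fix i
  have sm': "smono (a i) n" using sm by simp
  have ni: "\<forall>j. U i j \<noteq> \<infinity>" using ninf by simp
  show "env_mat a n U i n = fb $ i" using env_end[OF sm' n1 ni un[rule_format]] unfolding env_mat_def by simp
  fix j assume "j \<le> n"
  then show "U i j \<le> ereal (env_mat a n U i j)"
    using env_ge[OF sm' n1 ni u0[rule_format] un[rule_format]] unfolding env_mat_def by simp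
qed



theorem proposition5p1:
  fixes n :: nat
    and a :: "'d::finite \<Rightarrow> nat \<Rightarrow> real"
    and \<tau> :: "'d \<Rightarrow> nat \<Rightarrow> nat" and l :: "'d \<Rightarrow> nat"
    and X :: "(real^'m::finite) set"
    and f :: "real^'m \<Rightarrow> real^'d"
    and \<phi> :: "real^'d \<Rightarrow> real"
    and u :: "real^'m \<Rightarrow> 'd \<Rightarrow> nat \<Rightarrow> real"
    and W :: "((real^'m) \<times> (real^'d)) set"
    and xb :: "real^'m" and fb :: "real^'d" and tb :: "'d \<Rightarrow> nat"
  assumes n_pos: "1 \<le> n"
    and a_mono: "\<forall>i j. j < n \<longrightarrow> a i j < a i (Suc j)"
    and tau0: "\<forall>i. \<tau> i 0 = 0" and taul: "\<forall>i. \<tau> i (l i) = n"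
    and tau_mono: "\<forall>i t. t < l i \<longrightarrow> \<tau> i t < \<tau> i (Suc t)"
    and f_bnd: "\<forall>x\<in>X. \<forall>i. a i 0 \<le> f x $ i \<and> f x $ i \<le> a i n"
    and u_cvx: "\<forall>i j. j \<le> n \<longrightarrow> convex_on X (\<lambda>x. u x i j)"
    and u0: "\<forall>x\<in>X. \<forall>i. u x i 0 = a i 0"
    and un: "\<forall>x\<in>X. \<forall>i. u x i n = f x $ i"
    and umid: "\<forall>x\<in>X. \<forall>i. \<forall>j\<in>{1..n-1}. u x i j \<le> min (f x $ i) (a i j)"
    and W_cvx: "convex W"
    and W_graph: "{(x, f x) | x. x \<in> X} \<subseteq> W"
    and xb_X: "xb \<in> X"
    and in_W: "(xb, fb) \<in> W"
    and tb_rng: "\<forall>i. 1 \<le> tb i \<and> tb i \<le> l i"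
    and fb_H: "\<forall>i. a i (\<tau> i (tb i - 1)) \<le> fb $ i \<and> fb $ i \<le> a i (\<tau> i (tb i))"
  defines "ubar \<equiv> (\<lambda>i j. if j = n then ereal (fb $ i) else ereal (u xb i j))"
    and "uhat \<equiv> (\<lambda>i j. if j \<le> \<tau> i (tb i - 1) then ereal (a i j)
                        else if \<tau> i (tb i) \<le> j then ereal (fb $ i) else -\<infinity>)"
  shows "varphi a n \<phi> u W xb fb = concQ a n \<phi> (env_mat a n ubar)
       \<and> varphi_Hm a n \<tau> l \<phi> W xb fb = concQ a n \<phi> (env_mat a n uhat)
       \<and> varphi_H a n \<tau> l \<phi> u W xb fb
           = concQ a n \<phi> (env_mat a n (\<lambda>i j. max (ubar i j) (uhat i j)))"
proof -
  have sm: "\<forall>i. smono (a i) n" using a_mono unfolding smono_def by blast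
  have n0: "n \<noteq> 0" using n_pos by simp
  have taum: "\<forall>t<l i. \<tau> i t < \<tau> i (Suc t)" for i using tau_mono by blast
  have tbn: "\<tau> i (tb i) \<le> n" for i using tau_le[OF taum, of "tb i" "l i" i] tb_rng taul by auto
  have tbm: "\<tau> i (tb i - 1) < \<tau> i (tb i)" for i
  proof -
    have "1 \<le> tb i" "tb i \<le> l i" using tb_rng by auto
    then show ?thesis using tau_lt[OF taum, of "tb i - 1" "tb i" i] by simp
  qed
  have tb1: "\<tau> i (tb i - 1) < n" for i using tbn[of i] tbm[of i] by simp
  define U3 where "U3 = (\<lambda>i j. max (ubar i j) (uhat i j))"
  have ninf1: "\<forall>i j. ubar i j \<noteq> \<infinity>" unfolding ubar_def by simp
  have u01: "\<forall>i. ubar i 0 = ereal (a i 0)" unfolding ubar_def using n0 u0 xb_X by simp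
  have un1: "\<forall>i. ubar i n = ereal (fb $ i)" unfolding ubar_def by simp
  have ninf2: "\<forall>i j. uhat i j \<noteq> \<infinity>" unfolding uhat_def by simp
  have u02: "\<forall>i. uhat i 0 = ereal (a i 0)" unfolding uhat_def by simp
  have un2: "\<forall>i. uhat i n = ereal (fb $ i)"
  proof
    fix i show "uhat i n = ereal (fb $ i)" unfolding uhat_def using tb1[of i] tbn[of i] by simp
  qed
  have ninf3: "\<forall>i j. U3 i j \<noteq> \<infinity>" unfolding U3_def using ninf1 ninf2 by (simp add: max_def)
  have u03: "\<forall>i. U3 i 0 = ereal (a i 0)" unfolding U3_def using u01 u02 by simp
  have un3: "\<forall>i. U3 i n = ereal (fb $ i)" unfolding U3_def using un1 un2 by simp
  have ubar_le: "ubar i j \<le> ereal (t j)" if "j \<le> n" "j < n \<longrightarrow> u xb i j \<le> t j" "t n = fb $ i" for i j t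
    using that unfolding ubar_def by auto
  have uhat_le: "uhat i j \<le> ereal (t j)"
    if "\<forall>j\<le>\<tau> i (tb i - 1). a i j \<le> t j" "\<forall>j. \<tau> i (tb i) \<le> j \<longrightarrow> j \<le> n \<longrightarrow> fb $ i \<le> t j" "j \<le> n" for i j t
    using that unfolding uhat_def by auto
  have lo_of: "\<forall>j\<le>\<tau> i (tb i - 1). a i j \<le> t j" if "\<forall>j\<le>n. uhat i j \<le> ereal (t j)" for i t
  proof (intro allI impI)
    fix j assume "j \<le> \<tau> i (tb i - 1)"
    then show "a i j \<le> t j" using that[rule_format, of j] tb1[of i] unfolding uhat_def by simp
  qed
  have hi_of: "\<forall>j. \<tau> i (tb i) \<le> j \<longrightarrow> j \<le> n \<longrightarrow> fb $ i \<le> t j" if "\<forall>j\<le>n. uhat i j \<le> ereal (t j)" for i t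
  proof (intro allI impI)
    fix j assume j: "\<tau> i (tb i) \<le> j" "j \<le> n"
    then have "\<not> j \<le> \<tau> i (tb i - 1)" using tbm[of i] by simp
    then show "fb $ i \<le> t j" using that[rule_format, of j] j unfolding uhat_def by simp
  qed
  have inc_lohi: "(\<forall>j\<le>\<tau> i (tb i - 1). a i j \<le> s i j) \<and> (\<forall>j. \<tau> i (tb i) \<le> j \<longrightarrow> j \<le> n \<longrightarrow> fb $ i \<le> s i j)"
    if "s \<in> Qset a n" "\<forall>i. s i n = fb $ i" "Inc1 \<tau> l n (Zmap a s) \<delta>" for s \<delta> i
  proof -
    have "\<forall>i. (\<exists>\<mu>. rowQ (a i) n \<mu> (s i)) \<and> (\<forall>k>n. s i k = 0)" using Qset_iff[OF sm, of s] that(1) by (rule iffD1)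
    then obtain \<mu> where \<mu>: "rowQ (a i) n \<mu> (s i)" by blast
    have "\<forall>i. IncR (\<tau> i) (l i) n (Zr (a i) (s i)) (\<delta> i)" using Inc1_iff[of \<tau> l n a s \<delta>] that(3) by (rule iffD1)
    then have inc: "IncR (\<tau> i) (l i) n (Zr (a i) (s i)) (\<delta> i)" by (rule spec)
    note r = IncB[OF sm[rule_format] n_pos \<mu> that(2)[rule_format] tau0[rule_format] taul[rule_format] taum
          tb_rng[rule_format, THEN conjunct1] tb_rng[rule_format, THEN conjunct2]
          fb_H[rule_format, THEN conjunct1] fb_H[rule_format, THEN conjunct2] inc]
    show ?thesis using r(1) r(2) by (rule conjI)
  qed
  have inc_of: "Inc1 \<tau> l n (Zmap a s) (\<lambda>i t. if t < tb i then 1 else 0)"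
    if "s \<in> Qset a n" "\<forall>i. s i n = fb $ i"
       "\<forall>i. \<forall>j\<le>\<tau> i (tb i - 1). a i j \<le> s i j" "\<forall>i. \<forall>j. \<tau> i (tb i) \<le> j \<longrightarrow> j \<le> n \<longrightarrow> fb $ i \<le> s i j" for s
    unfolding Inc1_iff
  proof
    fix i
    have "\<forall>i. (\<exists>\<mu>. rowQ (a i) n \<mu> (s i)) \<and> (\<forall>k>n. s i k = 0)" using Qset_iff[OF sm, of s] that(1) by (rule iffD1)
    then obtain \<mu> where \<mu>: "rowQ (a i) n \<mu> (s i)" by blast
    show "IncR (\<tau> i) (l i) n (Zr (a i) (s i)) (\<lambda>t. if t < tb i then 1 else 0)"
      by (rule IncA[OF sm[rule_format] n_pos \<mu> that(2)[rule_format] tau0[rule_format] taul[rule_format] taum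
          tb_rng[rule_format, THEN conjunct1] tb_rng[rule_format, THEN conjunct2] that(3)[THEN spec, of i] that(4)[THEN spec, of i]])
  qed
  have part1: "varphi a n \<phi> u W xb fb = concQ a n \<phi> (env_mat a n ubar)"
    unfolding varphi_def
  proof (rule sup_generic[OF sm])
    fix s assume P: "is_mat n s \<and> (\<forall>i. s i n = fb $ i) \<and> (\<forall>i j. j < n \<longrightarrow> u xb i j \<le> s i j) \<and> (xb, fb) \<in> W"
      and sQ: "s \<in> Qset a n"
    have "\<forall>i j. j \<le> n \<longrightarrow> ubar i j \<le> ereal (s i j)" using P ubar_le by blast
    then show "env_mat a n ubar \<in> Qset a n \<and> (\<forall>i k. k \<le> n \<longrightarrow> env_mat a n ubar i k \<le> s i k) \<and> (\<forall>i. env_mat a n ubar i n = s i n)"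
      using envB[OF sm n_pos ninf1 u01 un1 sQ] P by blast
  next
    assume "env_mat a n ubar \<in> Qset a n"
    have A: "is_mat n (env_mat a n ubar) \<and> (\<forall>i. env_mat a n ubar i n = fb $ i) \<and> (\<forall>i j. j \<le> n \<longrightarrow> ubar i j \<le> ereal (env_mat a n ubar i j))"
      using envA[OF sm n_pos ninf1 u01 un1] .
    have "u xb i j \<le> env_mat a n ubar i j" if "j < n" for i j
    proof -
      have "ubar i j \<le> ereal (env_mat a n ubar i j)" using A that by simp
      moreover have "ubar i j = ereal (u xb i j)" using that unfolding ubar_def by simp
      ultimately show ?thesis by simp
    qed
    then show "is_mat n (env_mat a n ubar) \<and> (\<forall>i. env_mat a n ubar i n = fb $ i) \<and> (\<forall>i j. j < n \<longrightarrow> u xb i j \<le> env_mat a n ubar i j) \<and> (xb, fb) \<in> W"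
      using A in_W by blast
  qed
  have part2: "varphi_Hm a n \<tau> l \<phi> W xb fb = concQ a n \<phi> (env_mat a n uhat)"
    unfolding varphi_Hm_def
  proof (rule sup_generic[OF sm])
    fix s assume P: "is_mat n s \<and> (\<forall>i. s i n = fb $ i) \<and> (\<exists>\<delta>. Inc1 \<tau> l n (Zmap a s) \<delta>) \<and> (xb, fb) \<in> W"
      and sQ: "s \<in> Qset a n"
    from P obtain \<delta> where d: "Inc1 \<tau> l n (Zmap a s) \<delta>" by blast
    have P2: "\<forall>i. s i n = fb $ i" using P by blast
    have "\<forall>i j. j \<le> n \<longrightarrow> uhat i j \<le> ereal (s i j)"
    proof (intro allI impI)
      fix i j assume "j \<le> n"
      note lh = inc_lohi[OF sQ P2 d, of i]
      show "uhat i j \<le> ereal (s i j)" using uhat_le[OF lh[THEN conjunct1] lh[THEN conjunct2] \<open>j \<le> n\<close>] .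
    qed
    then show "env_mat a n uhat \<in> Qset a n \<and> (\<forall>i k. k \<le> n \<longrightarrow> env_mat a n uhat i k \<le> s i k) \<and> (\<forall>i. env_mat a n uhat i n = s i n)"
      using envB[OF sm n_pos ninf2 u02 un2 sQ] P by blast
  next
    assume EQ: "env_mat a n uhat \<in> Qset a n"
    have A: "is_mat n (env_mat a n uhat) \<and> (\<forall>i. env_mat a n uhat i n = fb $ i) \<and> (\<forall>i j. j \<le> n \<longrightarrow> uhat i j \<le> ereal (env_mat a n uhat i j))"
      using envA[OF sm n_pos ninf2 u02 un2] .
    have "Inc1 \<tau> l n (Zmap a (env_mat a n uhat)) (\<lambda>i t. if t < tb i then 1 else 0)"
      using inc_of[OF EQ] A lo_of hi_of by blast
    then show "is_mat n (env_mat a n uhat) \<and> (\<forall>i. env_mat a n uhat i n = fb $ i) \<and> (\<exists>\<delta>. Inc1 \<tau> l n (Zmap a (env_mat a n uhat)) \<delta>) \<and> (xb, fb) \<in> W"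
      using A in_W by blast
  qed
  have part3: "varphi_H a n \<tau> l \<phi> u W xb fb = concQ a n \<phi> (env_mat a n U3)"
    unfolding varphi_H_def
  proof (rule sup_generic[OF sm])
    fix s assume P: "is_mat n s \<and> (\<forall>i. s i n = fb $ i) \<and> (\<exists>\<delta>. Inc1 \<tau> l n (Zmap a s) \<delta>) \<and> (\<forall>i j. j < n \<longrightarrow> u xb i j \<le> s i j) \<and> (xb, fb) \<in> W"
      and sQ: "s \<in> Qset a n"
    from P obtain \<delta> where d: "Inc1 \<tau> l n (Zmap a s) \<delta>" by blast
    have P2: "\<forall>i. s i n = fb $ i" using P by blast
    have "\<forall>i j. j \<le> n \<longrightarrow> uhat i j \<le> ereal (s i j)"
    proof (intro allI impI)
      fix i j assume "j \<le> n"
      note lh = inc_lohi[OF sQ P2 d, of i]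
      show "uhat i j \<le> ereal (s i j)" using uhat_le[OF lh[THEN conjunct1] lh[THEN conjunct2] \<open>j \<le> n\<close>] .
    qed
    moreover have "\<forall>i j. j \<le> n \<longrightarrow> ubar i j \<le> ereal (s i j)" using P ubar_le by blast
    ultimately have "\<forall>i j. j \<le> n \<longrightarrow> U3 i j \<le> ereal (s i j)" unfolding U3_def by simp
    then show "env_mat a n U3 \<in> Qset a n \<and> (\<forall>i k. k \<le> n \<longrightarrow> env_mat a n U3 i k \<le> s i k) \<and> (\<forall>i. env_mat a n U3 i n = s i n)"
      using envB[OF sm n_pos ninf3 u03 un3 sQ] P by blast
  next
    assume EQ: "env_mat a n U3 \<in> Qset a n"
    have A: "is_mat n (env_mat a n U3) \<and> (\<forall>i. env_mat a n U3 i n = fb $ i) \<and> (\<forall>i j. j \<le> n \<longrightarrow> U3 i j \<le> ereal (env_mat a n U3 i j))"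
      using envA[OF sm n_pos ninf3 u03 un3] .
    then have Ah: "\<forall>i j. j \<le> n \<longrightarrow> uhat i j \<le> ereal (env_mat a n U3 i j)"
      and Ab: "\<forall>i j. j \<le> n \<longrightarrow> ubar i j \<le> ereal (env_mat a n U3 i j)" unfolding U3_def by auto
    have "Inc1 \<tau> l n (Zmap a (env_mat a n U3)) (\<lambda>i t. if t < tb i then 1 else 0)"
      using inc_of[OF EQ] A Ah lo_of hi_of by blast
    moreover have "u xb i j \<le> env_mat a n U3 i j" if "j < n" for i j
    proof -
      have "ubar i j \<le> ereal (env_mat a n U3 i j)" using Ab that by simp
      moreover have "ubar i j = ereal (u xb i j)" using that unfolding ubar_def by simp
      ultimately show ?thesis by simp
    qed
    ultimately show "is_mat n (env_mat a n U3) \<and> (\<forall>i. env_mat a n U3 i n = fb $ i) \<and> (\<exists>\<delta>. Inc1 \<tau> l n (Zmap a (env_mat a n U3)) \<delta>) \<and> (\<forall>i j. j < n \<longrightarrow> u xb i j \<le> env_mat a n U3 i j) \<and> (xb, fb) \<in> W"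
      using A in_W by blast
  qed
  show ?thesis using part1 part2 part3 unfolding U3_def by blast
qed



end
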